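(* The existential-completion 2-monad $T^{ex}$ on $\mathbf{SD}^{exp}$ induces (by restriction) a 2-monad $\widetilde{T^{ex}}$ on $\mathbf{UD}^{exp}$; that is, for every object $P$ of $\mathbf{UD}^{exp}$, $T^{ex}(P)=P^{ex}$ is in $\mathbf{UD}^{exp}$, $T^{ex}$ sends 1-cells of $\mathbf{UD}^{exp}$ to 1-cells of $\mathbf{UD}^{exp}$, and the components at objects of $\mathbf{UD}^{exp}$ of the unit and multiplication of $T^{ex}$ are 1-cells of $\mathbf{UD}^{exp}$.
   Context: A slat-doctrine is a functor $P:\mathcal{C}^{\mathrm{op}}\to\mathbf{Pos}$ with $\mathcal{C}$ having finite products; $P_f$ is reindexing along $f$. It is existential (resp. universal) if reindexing along each product projection has a left (resp. right) adjoint satisfying Beck–Chevalley (for every pullback of a projection $\mathrm{pr}:X\to A$ along $f:A'\to A$, with resulting projection $\mathrm{pr}'$ and $f':X'\to X$, $\exists_{\mathrm{pr}'}P_{f'}=P_f\exists_{\mathrm{pr}}$, resp. $\forall_{\mathrm{pr}'}P_{f'}=P_f\forall_{\mathrm{pr}}$). The 2-category $\mathbf{SD}$: objects slat-doctrines; 1-cells $(F,b):P\to R$ with $F$ a functor between base categories and $b:P\to R\circ F^{\mathrm{op}}$ a natural transformation; 2-cells $\theta:(F,b)\Rightarrow(G,c)$ natural transformations $F\to G$ with $b_A(\alpha)\le R_{\theta_A}(c_A(\alpha))$. $\mathbf{SD}^{exp}$ is the 2-full sub-2-category of slat-doctrines whose base category has exponents, with 1-cells whose functor preserves exponents; $\mathbf{UD}^{exp}$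 is its sub-2-category of universal slat-doctrines and 1-cells preserving the universal structure (commuting with right adjoints along projections). Existential completion: $P^{ex}(A)$ is the poset (reflection) of triples $(A,B,\alpha)$, $\alpha\in P(A\times B)$, with $(A,B,\alpha)\le(A,C,\beta)$ iff some $f:A\times B\to C$ has $\alpha\le P_{\langle\mathrm{pr}_A,f\rangle}(\beta)$, and $P^{ex}_f(C,D,\gamma)=(A,D,P_{f\times 1_D}(\gamma))$. $P\mapsto P^{ex}$ extends to a 2-functor left 2-adjoint to the forgetful 2-functor from existential slat-doctrines to $\mathbf{SD}$; $T^{ex}$ denotes the induced 2-monad (considered on $\mathbf{SD}^{exp}$), with unit component $P(A)\to P^{ex}(A)$, $\alpha\mapsto(A,1,P_{\mathrm{pr}_A}\alpha)$, and multiplication component $(P^{ex})^{ex}(A)\to P^{ex}(A)$, $(A,B,x)\mapsto\exists^{ex}_{\mathrm{pr}_A}(x)$ for $x\in P^{ex}(A\times B)$. *)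

theory Defs
  imports Main
begin

record ('o,'a) ccat =
  Ob  :: "'o set"
  Ar  :: "'a set"
  Dm  :: "'a \<Rightarrow> 'o"
  Cd  :: "'a \<Rightarrow> 'o"
  Idt :: "'o \<Rightarrow> 'a"
  Cmp :: "'a \<Rightarrow> 'a \<Rightarrow> 'a"   (* Cmp C g f = g o f *)
  Trm :: "'o"
  Prd :: "'o \<Rightarrow> 'o \<Rightarrow> 'o"
  Pr1 :: "'o \<Rightarrow> 'o \<Rightarrow> 'a"
  Pr2 :: "'o \<Rightarrow> 'o \<Rightarrow> 'a"

definition hom :: "('o,'a,'z) ccat_scheme \<Rightarrow> 'o \<Rightarrow> 'o \<Rightarrow> 'a set" where
  "hom C X Y = {f \<in> Ar C. Dm C f = X \<and> Cd C f = Y}"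

definition category :: "('o,'a,'z) ccat_scheme \<Rightarrow> bool" where
  "category C \<longleftrightarrow>
     (\<forall>f\<in>Ar C. Dm C f \<in> Ob C \<and> Cd C f \<in> Ob C) \<and>
     (\<forall>X\<in>Ob C. Idt C X \<in> hom C X X) \<and>
     (\<forall>X Y Z f g. f \<in> hom C X Y \<longrightarrow> g \<in> hom C Y Z \<longrightarrow> Cmp C g f \<in> hom C X Z) \<and>
     (\<forall>X Y f. f \<in> hom C X Y \<longrightarrow> Cmp C f (Idt C X) = f \<and> Cmp C (Idt C Y) f = f) \<and>
     (\<forall>W X Y Z f g h. f \<in> hom C W X \<longrightarrow> g \<in> hom C X Y \<longrightarrow> h \<in> hom C Y Z \<longrightarrow>
        Cmp C h (Cmp C g f) = Cmp C (Cmp C h g) f)"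

definition fin_products :: "('o,'a,'z) ccat_scheme \<Rightarrow> bool" where
  "fin_products C \<longleftrightarrow>
     Trm C \<in> Ob C \<and> (\<forall>X\<in>Ob C. \<exists>!h. h \<in> hom C X (Trm C)) \<and>
     (\<forall>A\<in>Ob C. \<forall>B\<in>Ob C.
        Prd C A B \<in> Ob C \<and> Pr1 C A B \<in> hom C (Prd C A B) A \<and> Pr2 C A B \<in> hom C (Prd C A B) B \<and>
        (\<forall>X f g. f \<in> hom C X A \<longrightarrow> g \<in> hom C X B \<longrightarrow>
           (\<exists>!h. h \<in> hom C X (Prd C A B) \<and> Cmp C (Pr1 C A B) h = f \<and> Cmp C (Pr2 C A B) h = g)))"

definition pair :: "('o,'a,'z) ccat_scheme \<Rightarrow> 'a \<Rightarrow> 'a \<Rightarrow> 'a" where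
  "pair C f g = (THE h. h \<in> hom C (Dm C f) (Prd C (Cd C f) (Cd C g)) \<and>
      Cmp C (Pr1 C (Cd C f) (Cd C g)) h = f \<and> Cmp C (Pr2 C (Cd C f) (Cd C g)) h = g)"

definition times :: "('o,'a,'z) ccat_scheme \<Rightarrow> 'a \<Rightarrow> 'a \<Rightarrow> 'a" where
  "times C f g = pair C (Cmp C f (Pr1 C (Dm C f) (Dm C g))) (Cmp C g (Pr2 C (Dm C f) (Dm C g)))"

definition is_exponential :: "('o,'a,'z) ccat_scheme \<Rightarrow> 'o \<Rightarrow> 'o \<Rightarrow> 'o \<Rightarrow> 'a \<Rightarrow> bool" where
  "is_exponential C B D E ev \<longleftrightarrow>
     E \<in> Ob C \<and> ev \<in> hom C (Prd C E B) D \<and>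
     (\<forall>A\<in>Ob C. \<forall>f\<in>hom C (Prd C A B) D.
        \<exists>!g. g \<in> hom C A E \<and> Cmp C ev (times C g (Idt C B)) = f)"

definition has_exponents :: "('o,'a,'z) ccat_scheme \<Rightarrow> bool" where
  "has_exponents C \<longleftrightarrow> (\<forall>B\<in>Ob C. \<forall>D\<in>Ob C. \<exists>E ev. is_exponential C B D E ev)"

definition iso_ar :: "('o,'a,'z) ccat_scheme \<Rightarrow> 'a \<Rightarrow> bool" where
  "iso_ar C f \<longleftrightarrow> f \<in> Ar C \<and> (\<exists>g\<in>hom C (Cd C f) (Dm C f).
      Cmp C g f = Idt C (Dm C f) \<and> Cmp C f g = Idt C (Cd C f))"

definition inv_ar :: "('o,'a,'z) ccat_scheme \<Rightarrow> 'a \<Rightarrow> 'a" where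
  "inv_ar C f = (THE g. g \<in> hom C (Cd C f) (Dm C f) \<and>
      Cmp C g f = Idt C (Dm C f) \<and> Cmp C f g = Idt C (Cd C f))"

definition is_functor :: "('o,'a,'z) ccat_scheme \<Rightarrow> ('o2,'a2,'z2) ccat_scheme \<Rightarrow>
    ('o \<Rightarrow> 'o2) \<Rightarrow> ('a \<Rightarrow> 'a2) \<Rightarrow> bool" where
  "is_functor C D Fo Fa \<longleftrightarrow>
     (\<forall>X\<in>Ob C. Fo X \<in> Ob D) \<and>
     (\<forall>f\<in>Ar C. Fa f \<in> hom D (Fo (Dm C f)) (Fo (Cd C f))) \<and>
     (\<forall>X\<in>Ob C. Fa (Idt C X) = Idt D (Fo X)) \<and>
     (\<forall>X Y Z f g. f \<in> hom C X Y \<longrightarrow> g \<in> hom C Y Z \<longrightarrow> Fa (Cmp C g f) = Cmp D (Fa g) (Fa f))"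

definition cmpr :: "('o,'a,'z) ccat_scheme \<Rightarrow> ('o2,'a2,'z2) ccat_scheme \<Rightarrow>
    ('o \<Rightarrow> 'o2) \<Rightarrow> ('a \<Rightarrow> 'a2) \<Rightarrow> 'o \<Rightarrow> 'o \<Rightarrow> 'a2" where
  "cmpr C D Fo Fa A B = pair D (Fa (Pr1 C A B)) (Fa (Pr2 C A B))"

definition preserves_products :: "('o,'a,'z) ccat_scheme \<Rightarrow> ('o2,'a2,'z2) ccat_scheme \<Rightarrow>
    ('o \<Rightarrow> 'o2) \<Rightarrow> ('a \<Rightarrow> 'a2) \<Rightarrow> bool" where
  "preserves_products C D Fo Fa \<longleftrightarrow>
     (\<forall>Y\<in>Ob D. \<exists>!h. h \<in> hom D Y (Fo (Trm C))) \<and>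
     (\<forall>A\<in>Ob C. \<forall>B\<in>Ob C. iso_ar D (cmpr C D Fo Fa A B))"

definition preserves_exponents :: "('o,'a,'z) ccat_scheme \<Rightarrow> ('o2,'a2,'z2) ccat_scheme \<Rightarrow>
    ('o \<Rightarrow> 'o2) \<Rightarrow> ('a \<Rightarrow> 'a2) \<Rightarrow> bool" where
  "preserves_exponents C D Fo Fa \<longleftrightarrow>
     (\<forall>B E' E ev. B \<in> Ob C \<longrightarrow> E' \<in> Ob C \<longrightarrow> is_exponential C B E' E ev \<longrightarrow>
        is_exponential D (Fo B) (Fo E') (Fo E) (Cmp D (Fa ev) (inv_ar D (cmpr C D Fo Fa E B))))"

text \<open>\<open>Car P A\<close> is the poset \<open>P(A)\<close> with order \<open>Leq P A\<close>; \<open>Rdx P f\<close> is \<open>P_f\<close>.\<close>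
record ('a,'o,'e) pdoc =
  Car :: "'o \<Rightarrow> 'e set"
  Leq :: "'o \<Rightarrow> 'e \<Rightarrow> 'e \<Rightarrow> bool"
  Rdx :: "'a \<Rightarrow> 'e \<Rightarrow> 'e"

definition doctrine :: "('o,'a,'z) ccat_scheme \<Rightarrow> ('a,'o,'e) pdoc \<Rightarrow> bool" where
  "doctrine C P \<longleftrightarrow>
     (\<forall>X\<in>Ob C. (\<forall>x\<in>Car P X. Leq P X x x) \<and>
        (\<forall>x\<in>Car P X. \<forall>y\<in>Car P X. \<forall>z\<in>Car P X. Leq P X x y \<longrightarrow> Leq P X y z \<longrightarrow> Leq P X x z) \<and>
        (\<forall>x\<in>Car P X. \<forall>y\<in>Car P X. Leq P X x y \<longrightarrow> Leq P X y x \<longrightarrow> x = y)) \<and>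
     (\<forall>f\<in>Ar C. \<forall>x\<in>Car P (Cd C f). Rdx P f x \<in> Car P (Dm C f)) \<and>
     (\<forall>f\<in>Ar C. \<forall>x\<in>Car P (Cd C f). \<forall>y\<in>Car P (Cd C f).
        Leq P (Cd C f) x y \<longrightarrow> Leq P (Dm C f) (Rdx P f x) (Rdx P f y)) \<and>
     (\<forall>X\<in>Ob C. \<forall>x\<in>Car P X. Rdx P (Idt C X) x = x) \<and>
     (\<forall>X Y Z f g. f \<in> hom C X Y \<longrightarrow> g \<in> hom C Y Z \<longrightarrow>
        (\<forall>x\<in>Car P Z. Rdx P (Cmp C g f) x = Rdx P f (Rdx P g x)))"

definition is_forall :: "('o,'a,'z) ccat_scheme \<Rightarrow> ('a,'o,'e) pdoc \<Rightarrow> 'o \<Rightarrow> 'o \<Rightarrow> ('e \<Rightarrow> 'e) \<Rightarrow> bool" where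
  "is_forall C P A B u \<longleftrightarrow>
     (\<forall>y\<in>Car P (Prd C A B). u y \<in> Car P A) \<and>
     (\<forall>x\<in>Car P A. \<forall>y\<in>Car P (Prd C A B).
        Leq P (Prd C A B) (Rdx P (Pr1 C A B) x) y \<longleftrightarrow> Leq P A x (u y))"

text \<open>\<open>z\<close> is the value at \<open>y\<close> of a left adjoint to \<open>P_{pr_A}\<close>.\<close>
definition is_exists_val :: "('o,'a,'z) ccat_scheme \<Rightarrow> ('a,'o,'e) pdoc \<Rightarrow> 'o \<Rightarrow> 'o \<Rightarrow> 'e \<Rightarrow> 'e \<Rightarrow> bool" where
  "is_exists_val C P A B y z \<longleftrightarrow>
     z \<in> Car P A \<and>
     (\<forall>w\<in>Car P A. Leq P A z w \<longleftrightarrow> Leq P (Prd C A B) y (Rdx P (Pr1 C A B) w))"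

definition universal :: "('o,'a,'z) ccat_scheme \<Rightarrow> ('a,'o,'e) pdoc \<Rightarrow> bool" where
  "universal C P \<longleftrightarrow> doctrine C P \<and>
     (\<exists>u. (\<forall>A\<in>Ob C. \<forall>B\<in>Ob C. is_forall C P A B (u A B)) \<and>
          (\<forall>A A' B f. f \<in> hom C A' A \<longrightarrow> B \<in> Ob C \<longrightarrow>
             (\<forall>y\<in>Car P (Prd C A B).
                Rdx P f (u A B y) = u A' B (Rdx P (times C f (Idt C B)) y))))"

definition SDexp_obj :: "('o,'a,'z) ccat_scheme \<Rightarrow> ('a,'o,'e) pdoc \<Rightarrow> bool" where
  "SDexp_obj C P \<longleftrightarrow> category C \<and> fin_products C \<and> has_exponents C \<and> doctrine C P"

definition UDexp_obj :: "('o,'a,'z) ccat_scheme \<Rightarrow> ('a,'o,'e) pdoc \<Rightarrow> bool" where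
  "UDexp_obj C P \<longleftrightarrow> SDexp_obj C P \<and> universal C P"

definition SD_1cell :: "('o,'a,'z) ccat_scheme \<Rightarrow> ('a,'o,'e) pdoc \<Rightarrow>
    ('o2,'a2,'z2) ccat_scheme \<Rightarrow> ('a2,'o2,'e2) pdoc \<Rightarrow>
    ('o \<Rightarrow> 'o2) \<Rightarrow> ('a \<Rightarrow> 'a2) \<Rightarrow> ('o \<Rightarrow> 'e \<Rightarrow> 'e2) \<Rightarrow> bool" where
  "SD_1cell C P D R Fo Fa b \<longleftrightarrow>
     is_functor C D Fo Fa \<and> preserves_products C D Fo Fa \<and>
     (\<forall>A\<in>Ob C. \<forall>x\<in>Car P A. b A x \<in> Car R (Fo A)) \<and>
     (\<forall>A\<in>Ob C. \<forall>x\<in>Car P A. \<forall>y\<in>Car P A. Leq P A x y \<longrightarrow> Leq R (Fo A) (b A x) (b A y)) \<and>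
     (\<forall>f\<in>Ar C. \<forall>x\<in>Car P (Cd C f). b (Dm C f) (Rdx P f x) = Rdx R (Fa f) (b (Cd C f) x))"

definition SDexp_1cell :: "('o,'a,'z) ccat_scheme \<Rightarrow> ('a,'o,'e) pdoc \<Rightarrow>
    ('o2,'a2,'z2) ccat_scheme \<Rightarrow> ('a2,'o2,'e2) pdoc \<Rightarrow>
    ('o \<Rightarrow> 'o2) \<Rightarrow> ('a \<Rightarrow> 'a2) \<Rightarrow> ('o \<Rightarrow> 'e \<Rightarrow> 'e2) \<Rightarrow> bool" where
  "SDexp_1cell C P D R Fo Fa b \<longleftrightarrow> SD_1cell C P D R Fo Fa b \<and> preserves_exponents C D Fo Fa"

text \<open>Commuting with the right adjoints along projections
  (modulo the canonical iso \<open>FA\<times>FB \<cong> F(A\<times>B)\<close>).\<close>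
definition preserves_forall :: "('o,'a,'z) ccat_scheme \<Rightarrow> ('a,'o,'e) pdoc \<Rightarrow>
    ('o2,'a2,'z2) ccat_scheme \<Rightarrow> ('a2,'o2,'e2) pdoc \<Rightarrow>
    ('o \<Rightarrow> 'o2) \<Rightarrow> ('a \<Rightarrow> 'a2) \<Rightarrow> ('o \<Rightarrow> 'e \<Rightarrow> 'e2) \<Rightarrow> bool" where
  "preserves_forall C P D R Fo Fa b \<longleftrightarrow>
     (\<forall>uP uR. (\<forall>A\<in>Ob C. \<forall>B\<in>Ob C. is_forall C P A B (uP A B)) \<longrightarrow>
              (\<forall>A\<in>Ob D. \<forall>B\<in>Ob D. is_forall D R A B (uR A B)) \<longrightarrow>
        (\<forall>A\<in>Ob C. \<forall>B\<in>Ob C. \<forall>y\<in>Car P (Prd C A B).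
           b A (uP A B y) =
           uR (Fo A) (Fo B) (Rdx R (inv_ar D (cmpr C D Fo Fa A B)) (b (Prd C A B) y))))"

definition UDexp_1cell :: "('o,'a,'z) ccat_scheme \<Rightarrow> ('a,'o,'e) pdoc \<Rightarrow>
    ('o2,'a2,'z2) ccat_scheme \<Rightarrow> ('a2,'o2,'e2) pdoc \<Rightarrow>
    ('o \<Rightarrow> 'o2) \<Rightarrow> ('a \<Rightarrow> 'a2) \<Rightarrow> ('o \<Rightarrow> 'e \<Rightarrow> 'e2) \<Rightarrow> bool" where
  "UDexp_1cell C P D R Fo Fa b \<longleftrightarrow>
     SDexp_1cell C P D R Fo Fa b \<and> preserves_forall C P D R Fo Fa b"

text \<open>Preorder on pairs \<open>(B,\<alpha>)\<close>, \<open>\<alpha> \<in> P(A\<times>B)\<close> (standing for triples \<open>(A,B,\<alpha>)\<close>).\<close>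
definition exle :: "('o,'a,'z) ccat_scheme \<Rightarrow> ('a,'o,'e) pdoc \<Rightarrow> 'o \<Rightarrow> 'o \<times> 'e \<Rightarrow> 'o \<times> 'e \<Rightarrow> bool" where
  "exle C P A p q \<longleftrightarrow>
     (\<exists>f\<in>hom C (Prd C A (fst p)) (fst q).
        Leq P (Prd C A (fst p)) (snd p) (Rdx P (pair C (Pr1 C A (fst p)) f) (snd q)))"

text \<open>Equivalence class of \<open>(A,B,\<alpha>)\<close> in the poset reflection.\<close>
definition ex_cls :: "('o,'a,'z) ccat_scheme \<Rightarrow> ('a,'o,'e) pdoc \<Rightarrow> 'o \<Rightarrow> 'o \<Rightarrow> 'e \<Rightarrow> ('o \<times> 'e) set" where
  "ex_cls C P A B \<alpha> = {q. fst q \<in> Ob C \<and> snd q \<in> Car P (Prd C A (fst q)) \<and>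
      exle C P A (B,\<alpha>) q \<and> exle C P A q (B,\<alpha>)}"

definition Pex :: "('o,'a,'z) ccat_scheme \<Rightarrow> ('a,'o,'e) pdoc \<Rightarrow> ('a,'o,('o \<times> 'e) set) pdoc" where
  "Pex C P = \<lparr> Car = (\<lambda>A. {ex_cls C P A B \<alpha> | B \<alpha>. B \<in> Ob C \<and> \<alpha> \<in> Car P (Prd C A B)}),
               Leq = (\<lambda>A s t. \<exists>p\<in>s. \<exists>q\<in>t. exle C P A p q),
               Rdx = (\<lambda>f s. \<Union>p\<in>s. ex_cls C P (Dm C f) (fst p)
                                 (Rdx P (times C f (Idt C (fst p))) (snd p))) \<rparr>"

text \<open>Action of \<open>T^ex\<close> on the natural-transformation part of a 1-cell \<open>(F,b)\<close>.\<close>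
definition bex :: "('o,'a,'z) ccat_scheme \<Rightarrow> ('a,'o,'e) pdoc \<Rightarrow>
    ('o2,'a2,'z2) ccat_scheme \<Rightarrow> ('a2,'o2,'e2) pdoc \<Rightarrow>
    ('o \<Rightarrow> 'o2) \<Rightarrow> ('a \<Rightarrow> 'a2) \<Rightarrow> ('o \<Rightarrow> 'e \<Rightarrow> 'e2) \<Rightarrow> 'o \<Rightarrow> ('o \<times> 'e) set \<Rightarrow> ('o2 \<times> 'e2) set" where
  "bex C P D R Fo Fa b A s = (\<Union>p\<in>s. ex_cls D R (Fo A) (Fo (fst p))
      (Rdx R (inv_ar D (cmpr C D Fo Fa A (fst p))) (b (Prd C A (fst p)) (snd p))))"

text \<open>Unit component \<open>\<alpha> \<mapsto> (A,1,P_{pr_A}\<alpha>)\<close> (with identity base functor).\<close>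
definition eta :: "('o,'a,'z) ccat_scheme \<Rightarrow> ('a,'o,'e) pdoc \<Rightarrow> 'o \<Rightarrow> 'e \<Rightarrow> ('o \<times> 'e) set" where
  "eta C P A \<alpha> = ex_cls C P A (Trm C) (Rdx P (Pr1 C A (Trm C)) \<alpha>)"

text \<open>Multiplication component \<open>(A,B,x) \<mapsto> \<exists>^ex_{pr_A}(x)\<close> (with identity base functor).\<close>
definition mu :: "('o,'a,'z) ccat_scheme \<Rightarrow> ('a,'o,'e) pdoc \<Rightarrow> 'o \<Rightarrow>
    ('o \<times> ('o \<times> 'e) set) set \<Rightarrow> ('o \<times> 'e) set" where
  "mu C P A s = (THE z. \<exists>p\<in>s. is_exists_val C (Pex C P) A (fst p) (snd p) z)"

end

theory Submission
  imports Defs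
begin


locale cc =
  fixes C :: "('o,'a,'z) ccat_scheme"
  assumes cat: "category C" and fp: "fin_products C"
begin

lemma hom_iff: "f \<in> hom C X Y \<longleftrightarrow> f \<in> Ar C \<and> Dm C f = X \<and> Cd C f = Y"
  by (simp add: hom_def)

lemma dm_ob[simp]: "f \<in> Ar C \<Longrightarrow> Dm C f \<in> Ob C"
  using cat by (simp add: category_def)
lemma cd_ob[simp]: "f \<in> Ar C \<Longrightarrow> Cd C f \<in> Ob C"
  using cat by (simp add: category_def)
lemma id_hom: "X \<in> Ob C \<Longrightarrow> Idt C X \<in> hom C X X"
  using cat by (simp add: category_def)
lemma id_ar[simp]: "X \<in> Ob C \<Longrightarrow> Idt C X \<in> Ar C"
  using id_hom by (simp add: hom_iff)
lemma dm_id[simp]: "X \<in> Ob C \<Longrightarrow> Dm C (Idt C X) = X"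
  using id_hom by (simp add: hom_iff)
lemma cd_id[simp]: "X \<in> Ob C \<Longrightarrow> Cd C (Idt C X) = X"
  using id_hom by (simp add: hom_iff)
lemma comp_hom: "f \<in> Ar C \<Longrightarrow> g \<in> Ar C \<Longrightarrow> Cd C f = Dm C g \<Longrightarrow>
   Cmp C g f \<in> hom C (Dm C f) (Cd C g)"
  using cat unfolding category_def hom_iff by metis
lemma comp_ar[simp]: "f \<in> Ar C \<Longrightarrow> g \<in> Ar C \<Longrightarrow> Cd C f = Dm C g \<Longrightarrow> Cmp C g f \<in> Ar C"
  using comp_hom by (simp add: hom_iff)
lemma dm_comp[simp]: "f \<in> Ar C \<Longrightarrow> g \<in> Ar C \<Longrightarrow> Cd C f = Dm C g \<Longrightarrow> Dm C (Cmp C g f) = Dm C f"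
  using comp_hom by (simp add: hom_iff)
lemma cd_comp[simp]: "f \<in> Ar C \<Longrightarrow> g \<in> Ar C \<Longrightarrow> Cd C f = Dm C g \<Longrightarrow> Cd C (Cmp C g f) = Cd C g"
  using comp_hom by (simp add: hom_iff)
lemma comp_id_r[simp]: "f \<in> Ar C \<Longrightarrow> X = Dm C f \<Longrightarrow> Cmp C f (Idt C X) = f"
  using cat unfolding category_def hom_iff by metis
lemma comp_id_l[simp]: "f \<in> Ar C \<Longrightarrow> Y = Cd C f \<Longrightarrow> Cmp C (Idt C Y) f = f"
  using cat unfolding category_def hom_iff by metis
lemma comp_assoc[simp]: "f \<in> Ar C \<Longrightarrow> g \<in> Ar C \<Longrightarrow> h \<in> Ar C \<Longrightarrow> Cd C f = Dm C g \<Longrightarrow>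
    Cd C g = Dm C h \<Longrightarrow> Cmp C (Cmp C h g) f = Cmp C h (Cmp C g f)"
proof -
  assume a: "f \<in> Ar C" "g \<in> Ar C" "h \<in> Ar C" "Cd C f = Dm C g" "Cd C g = Dm C h"
  have "f \<in> hom C (Dm C f) (Dm C g)" "g \<in> hom C (Dm C g) (Dm C h)" "h \<in> hom C (Dm C h) (Cd C h)"
    using a by (auto simp: hom_iff)
  then show ?thesis using cat unfolding category_def by metis
qed

lemma trm_ob[simp]: "Trm C \<in> Ob C"
  using fp by (simp add: fin_products_def)
lemma prd_ob[simp]: "A \<in> Ob C \<Longrightarrow> B \<in> Ob C \<Longrightarrow> Prd C A B \<in> Ob C"
  using fp by (simp add: fin_products_def)
lemma pr1_hom: "A \<in> Ob C \<Longrightarrow> B \<in> Ob C \<Longrightarrow> Pr1 C A B \<in> hom C (Prd C A B) A"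
  using fp by (simp add: fin_products_def)
lemma pr2_hom: "A \<in> Ob C \<Longrightarrow> B \<in> Ob C \<Longrightarrow> Pr2 C A B \<in> hom C (Prd C A B) B"
  using fp by (simp add: fin_products_def)
lemma pr1_ar[simp]: "A \<in> Ob C \<Longrightarrow> B \<in> Ob C \<Longrightarrow> Pr1 C A B \<in> Ar C"
  using pr1_hom by (simp add: hom_iff)
lemma dm_pr1[simp]: "A \<in> Ob C \<Longrightarrow> B \<in> Ob C \<Longrightarrow> Dm C (Pr1 C A B) = Prd C A B"
  using pr1_hom by (simp add: hom_iff)
lemma cd_pr1[simp]: "A \<in> Ob C \<Longrightarrow> B \<in> Ob C \<Longrightarrow> Cd C (Pr1 C A B) = A"
  using pr1_hom by (simp add: hom_iff)
lemma pr2_ar[simp]: "A \<in> Ob C \<Longrightarrow> B \<in> Ob C \<Longrightarrow> Pr2 C A B \<in> Ar C"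
  using pr2_hom by (simp add: hom_iff)
lemma dm_pr2[simp]: "A \<in> Ob C \<Longrightarrow> B \<in> Ob C \<Longrightarrow> Dm C (Pr2 C A B) = Prd C A B"
  using pr2_hom by (simp add: hom_iff)
lemma cd_pr2[simp]: "A \<in> Ob C \<Longrightarrow> B \<in> Ob C \<Longrightarrow> Cd C (Pr2 C A B) = B"
  using pr2_hom by (simp add: hom_iff)

lemma pair_ex1: "A \<in> Ob C \<Longrightarrow> B \<in> Ob C \<Longrightarrow> f \<in> hom C X A \<Longrightarrow> g \<in> hom C X B \<Longrightarrow>
  \<exists>!h. h \<in> hom C X (Prd C A B) \<and> Cmp C (Pr1 C A B) h = f \<and> Cmp C (Pr2 C A B) h = g"
  using fp unfolding fin_products_def by blast

lemma pair_prop: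
  assumes "f \<in> Ar C" "g \<in> Ar C" "Dm C f = Dm C g"
  shows "pair C f g \<in> hom C (Dm C f) (Prd C (Cd C f) (Cd C g)) \<and>
     Cmp C (Pr1 C (Cd C f) (Cd C g)) (pair C f g) = f \<and> Cmp C (Pr2 C (Cd C f) (Cd C g)) (pair C f g) = g"
proof -
  have "\<exists>!h. h \<in> hom C (Dm C f) (Prd C (Cd C f) (Cd C g)) \<and> Cmp C (Pr1 C (Cd C f) (Cd C g)) h = f
     \<and> Cmp C (Pr2 C (Cd C f) (Cd C g)) h = g"
    using assms by (intro pair_ex1) (auto simp: hom_iff)
  then show ?thesis unfolding pair_def by (rule theI')
qed

lemma pair_ar[simp]: "f \<in> Ar C \<Longrightarrow> g \<in> Ar C \<Longrightarrow> Dm C f = Dm C g \<Longrightarrow> pair C f g \<in> Ar C"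
  using pair_prop by (simp add: hom_iff)
lemma dm_pair[simp]: "f \<in> Ar C \<Longrightarrow> g \<in> Ar C \<Longrightarrow> Dm C f = Dm C g \<Longrightarrow> Dm C (pair C f g) = Dm C f"
  using pair_prop by (simp add: hom_iff)
lemma cd_pair[simp]: "f \<in> Ar C \<Longrightarrow> g \<in> Ar C \<Longrightarrow> Dm C f = Dm C g \<Longrightarrow>
   Cd C (pair C f g) = Prd C (Cd C f) (Cd C g)"
  using pair_prop by (simp add: hom_iff)
lemma pr1_pair[simp]: "f \<in> Ar C \<Longrightarrow> g \<in> Ar C \<Longrightarrow> Dm C f = Dm C g \<Longrightarrow> A = Cd C f \<Longrightarrow> B = Cd C g \<Longrightarrow>
   Cmp C (Pr1 C A B) (pair C f g) = f"
  using pair_prop by simp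
lemma pr2_pair[simp]: "f \<in> Ar C \<Longrightarrow> g \<in> Ar C \<Longrightarrow> Dm C f = Dm C g \<Longrightarrow> A = Cd C f \<Longrightarrow> B = Cd C g \<Longrightarrow>
   Cmp C (Pr2 C A B) (pair C f g) = g"
  using pair_prop by simp

lemma pair_unique:
  assumes "h \<in> Ar C" "Cd C h = Prd C A B" "A \<in> Ob C" "B \<in> Ob C"
  shows "pair C (Cmp C (Pr1 C A B) h) (Cmp C (Pr2 C A B) h) = h"
proof -
  let ?f = "Cmp C (Pr1 C A B) h" and ?g = "Cmp C (Pr2 C A B) h"
  have f: "?f \<in> Ar C" "Dm C ?f = Dm C h" "Cd C ?f = A" using assms by auto
  have g: "?g \<in> Ar C" "Dm C ?g = Dm C h" "Cd C ?g = B" using assms by auto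
  have "\<exists>!k. k \<in> hom C (Dm C h) (Prd C A B) \<and> Cmp C (Pr1 C A B) k = ?f \<and> Cmp C (Pr2 C A B) k = ?g"
    using f g assms by (intro pair_ex1) (auto simp: hom_iff)
  moreover have "h \<in> hom C (Dm C h) (Prd C A B)" using assms by (simp add: hom_iff)
  moreover have "pair C ?f ?g \<in> hom C (Dm C h) (Prd C A B)" using f g by (simp add: hom_iff)
  moreover have "Cmp C (Pr1 C A B) (pair C ?f ?g) = ?f" "Cmp C (Pr2 C A B) (pair C ?f ?g) = ?g"
    using f g by simp_all
  ultimately show ?thesis by blast
qed

lemma pair_eta[simp]: "h \<in> Ar C \<Longrightarrow> Cd C h = Prd C A B \<Longrightarrow> A \<in> Ob C \<Longrightarrow> B \<in> Ob C \<Longrightarrow>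
   pair C (Cmp C (Pr1 C A B) h) (Cmp C (Pr2 C A B) h) = h"
  by (rule pair_unique)

lemma pair_p1p2[simp]: "A \<in> Ob C \<Longrightarrow> B \<in> Ob C \<Longrightarrow> pair C (Pr1 C A B) (Pr2 C A B) = Idt C (Prd C A B)"
  using pair_unique[of "Idt C (Prd C A B)" A B] by simp

lemma pair_comp[simp]: "f \<in> Ar C \<Longrightarrow> g \<in> Ar C \<Longrightarrow> h \<in> Ar C \<Longrightarrow> Dm C f = Dm C g \<Longrightarrow> Cd C h = Dm C f \<Longrightarrow>
   Cmp C (pair C f g) h = pair C (Cmp C f h) (Cmp C g h)"
  using pair_unique[of "Cmp C (pair C f g) h" "Cd C f" "Cd C g"]
  by (simp del: pair_eta add: comp_assoc[symmetric])

lemma prod_ext: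
  assumes "h \<in> Ar C" "k \<in> Ar C" "Cd C h = Prd C A B" "Cd C k = Prd C A B" "A \<in> Ob C" "B \<in> Ob C"
    "Cmp C (Pr1 C A B) h = Cmp C (Pr1 C A B) k" "Cmp C (Pr2 C A B) h = Cmp C (Pr2 C A B) k"
  shows "h = k"
  using pair_unique[of h A B] pair_unique[of k A B] assms by metis

lemmas times_eq[simp] = times_def

definition trm :: "'o \<Rightarrow> 'a" where "trm X = (THE h. h \<in> hom C X (Trm C))"

lemma trm_hom: "X \<in> Ob C \<Longrightarrow> trm X \<in> hom C X (Trm C)"
  unfolding trm_def using fp unfolding fin_products_def by (metis theI')
lemma trm_ar[simp]: "X \<in> Ob C \<Longrightarrow> trm X \<in> Ar C" using trm_hom by (simp add: hom_iff)
lemma dm_trm[simp]: "X \<in> Ob C \<Longrightarrow> Dm C (trm X) = X" using trm_hom by (simp add: hom_iff)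
lemma cd_trm[simp]: "X \<in> Ob C \<Longrightarrow> Cd C (trm X) = Trm C" using trm_hom by (simp add: hom_iff)
lemma trm_unique: "h \<in> Ar C \<Longrightarrow> Cd C h = Trm C \<Longrightarrow> h = trm (Dm C h)"
proof -
  assume h: "h \<in> Ar C" "Cd C h = Trm C"
  have "\<exists>!k. k \<in> hom C (Dm C h) (Trm C)" using fp h unfolding fin_products_def by simp
  moreover have "h \<in> hom C (Dm C h) (Trm C)" using h by (simp add: hom_iff)
  ultimately show ?thesis using trm_hom[of "Dm C h"] h by auto
qed

lemma exp_basic:
  assumes "is_exponential C B D E ev"
  shows "E \<in> Ob C" "ev \<in> Ar C" "Dm C ev = Prd C E B" "Cd C ev = D"
  using assms by (auto simp: is_exponential_def hom_iff)

lemma exp_curry: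
  assumes "is_exponential C B D E ev" "A \<in> Ob C" "B \<in> Ob C" "h \<in> Ar C" "Dm C h = Prd C A B" "Cd C h = D"
  shows "\<exists>g. g \<in> Ar C \<and> Dm C g = A \<and> Cd C g = E \<and>
     Cmp C ev (pair C (Cmp C g (Pr1 C A B)) (Pr2 C A B)) = h"
proof -
  have "h \<in> hom C (Prd C A B) D" using assms by (simp add: hom_iff)
  then obtain g where g: "g \<in> hom C A E" "Cmp C ev (times C g (Idt C B)) = h"
    using assms unfolding is_exponential_def by blast
  then show ?thesis using assms exp_basic[OF assms(1)] by (auto simp: hom_iff)
qed

lemma exp_app:
  assumes "is_exponential C B D E ev" "A \<in> Ob C" "B \<in> Ob C" "g \<in> Ar C" "Dm C g = A" "Cd C g = E"
    "Cmp C ev (pair C (Cmp C g (Pr1 C A B)) (Pr2 C A B)) = h"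
    "u \<in> Ar C" "v \<in> Ar C" "Dm C u = Dm C v" "Cd C u = A" "Cd C v = B"
  shows "Cmp C ev (pair C (Cmp C g u) v) = Cmp C h (pair C u v)"
proof -
  note e = exp_basic[OF assms(1)]
  have "pair C (Cmp C g u) v = Cmp C (pair C (Cmp C g (Pr1 C A B)) (Pr2 C A B)) (pair C u v)"
    using assms by simp
  then show ?thesis using assms e by (simp add: comp_assoc[symmetric] del: comp_assoc pair_comp)
qed

lemma iso_inv:
  assumes "iso_ar C f"
  shows "inv_ar C f \<in> Ar C" "Dm C (inv_ar C f) = Cd C f" "Cd C (inv_ar C f) = Dm C f"
    "Cmp C (inv_ar C f) f = Idt C (Dm C f)" "Cmp C f (inv_ar C f) = Idt C (Cd C f)"
proof -
  obtain g where g: "g \<in> hom C (Cd C f) (Dm C f)" "Cmp C g f = Idt C (Dm C f)" "Cmp C f g = Idt C (Cd C f)"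
    and f: "f \<in> Ar C"
    using assms unfolding iso_ar_def by blast
  have u: "\<exists>!g. g \<in> hom C (Cd C f) (Dm C f) \<and> Cmp C g f = Idt C (Dm C f) \<and> Cmp C f g = Idt C (Cd C f)"
  proof (rule ex1I[of _ g])
    fix g' assume g': "g' \<in> hom C (Cd C f) (Dm C f) \<and> Cmp C g' f = Idt C (Dm C f) \<and> Cmp C f g' = Idt C (Cd C f)"
    have a: "g' \<in> Ar C" "Dm C g' = Cd C f" "Cd C g' = Dm C f" "Cmp C g' f = Idt C (Dm C f)"
      using g' by (auto simp: hom_iff)
    have b: "g \<in> Ar C" "Dm C g = Cd C f" "Cd C g = Dm C f" using g by (auto simp: hom_iff)
    have "g' = Cmp C g' (Idt C (Cd C f))" using a f by simp
    also have "\<dots> = Cmp C g' (Cmp C f g)" using g by simp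
    also have "\<dots> = Cmp C (Cmp C g' f) g" by (rule comp_assoc[symmetric]) (use a b f in simp_all)
    also have "\<dots> = g" using a b f by (simp del: comp_assoc)
    finally show "g' = g" .
  qed (use g in auto)
  have "inv_ar C f \<in> hom C (Cd C f) (Dm C f) \<and> Cmp C (inv_ar C f) f = Idt C (Dm C f) \<and>
     Cmp C f (inv_ar C f) = Idt C (Cd C f)"
    unfolding inv_ar_def using u by (rule theI')
  then show "inv_ar C f \<in> Ar C" "Dm C (inv_ar C f) = Cd C f" "Cd C (inv_ar C f) = Dm C f"
    "Cmp C (inv_ar C f) f = Idt C (Dm C f)" "Cmp C f (inv_ar C f) = Idt C (Cd C f)"
    by (auto simp: hom_iff)
qed

lemma inv_id[simp]: "X \<in> Ob C \<Longrightarrow> inv_ar C (Idt C X) = Idt C X"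
proof -
  assume X: "X \<in> Ob C"
  have "iso_ar C (Idt C X)" unfolding iso_ar_def using X by (auto simp: hom_iff intro!: bexI[of _ "Idt C X"])
  from iso_inv[OF this] X show ?thesis
    by (metis cd_id comp_id_r dm_id)
qed

end




lemma Car_Pex: "Car (Pex C P) A = {ex_cls C P A B \<alpha> | B \<alpha>. B \<in> Ob C \<and> \<alpha> \<in> Car P (Prd C A B)}"
  by (simp add: Pex_def)
lemma Leq_Pex: "Leq (Pex C P) A s t = (\<exists>p\<in>s. \<exists>q\<in>t. exle C P A p q)"
  by (simp add: Pex_def)
lemma Rdx_Pex: "Rdx (Pex C P) f s =
   (\<Union>p\<in>s. ex_cls C P (Dm C f) (fst p) (Rdx P (times C f (Idt C (fst p))) (snd p)))"
  by (simp add: Pex_def)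

context cc begin

lemma comp_lift: "Cmp C g f = h \<Longrightarrow> f \<in> Ar C \<Longrightarrow> g \<in> Ar C \<Longrightarrow> x \<in> Ar C \<Longrightarrow> Cd C f = Dm C g \<Longrightarrow>
   Cd C x = Dm C f \<Longrightarrow> Cmp C g (Cmp C f x) = Cmp C h x"
  by (subst comp_assoc[symmetric]) auto

lemma radj_unique:
  assumes "doctrine C Q" "A \<in> Ob C" "t \<in> Car Q A" "t' \<in> Car Q A"
    "\<forall>x\<in>Car Q A. R x \<longleftrightarrow> Leq Q A x t" "\<forall>x\<in>Car Q A. R x \<longleftrightarrow> Leq Q A x t'"
  shows "t = t'"
proof -
  have po: "(\<forall>x\<in>Car Q A. Leq Q A x x) \<and> (\<forall>x\<in>Car Q A. \<forall>y\<in>Car Q A. \<forall>z\<in>Car Q A. Leq Q A x y \<longrightarrow> Leq Q A y z \<longrightarrow> Leq Q A x z) \<and>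
     (\<forall>x\<in>Car Q A. \<forall>y\<in>Car Q A. Leq Q A x y \<longrightarrow> Leq Q A y x \<longrightarrow> x = y)"
    using bspec[OF assms(1)[unfolded doctrine_def, THEN conjunct1] assms(2)] .
  have r: "Leq Q A t t" "Leq Q A t' t'" using po assms(3,4) by auto
  have "Leq Q A t t'" using assms(3,5,6) r by blast
  moreover have "Leq Q A t' t" using assms(4,5,6) r by blast
  ultimately show ?thesis using po assms(3,4) by blast
qed

end

locale ud = cc C for C :: "('o,'a,'z) ccat_scheme" +
  fixes P :: "('a,'o,'e) pdoc"
  assumes exps: "has_exponents C" and doc: "doctrine C P" and univ: "universal C P"
begin

lemma docs1: "\<forall>X\<in>Ob C. (\<forall>x\<in>Car P X. Leq P X x x) \<and>
        (\<forall>x\<in>Car P X. \<forall>y\<in>Car P X. \<forall>z\<in>Car P X. Leq P X x y \<longrightarrow> Leq P X y z \<longrightarrow> Leq P X x z) \<and>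
        (\<forall>x\<in>Car P X. \<forall>y\<in>Car P X. Leq P X x y \<longrightarrow> Leq P X y x \<longrightarrow> x = y)"
  using doc unfolding doctrine_def by (elim conjE) assumption
lemma docs2: "\<forall>f\<in>Ar C. \<forall>x\<in>Car P (Cd C f). Rdx P f x \<in> Car P (Dm C f)"
  using doc unfolding doctrine_def by (elim conjE) assumption
lemma docs3: "\<forall>f\<in>Ar C. \<forall>x\<in>Car P (Cd C f). \<forall>y\<in>Car P (Cd C f).
        Leq P (Cd C f) x y \<longrightarrow> Leq P (Dm C f) (Rdx P f x) (Rdx P f y)"
  using doc unfolding doctrine_def by (elim conjE) assumption
lemma docs4: "\<forall>X\<in>Ob C. \<forall>x\<in>Car P X. Rdx P (Idt C X) x = x"
  using doc unfolding doctrine_def by (elim conjE) assumption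
lemma docs5: "\<forall>X Y Z f g. f \<in> hom C X Y \<longrightarrow> g \<in> hom C Y Z \<longrightarrow>
        (\<forall>x\<in>Car P Z. Rdx P (Cmp C g f) x = Rdx P f (Rdx P g x))"
  using doc unfolding doctrine_def by (elim conjE) assumption
lemmas docs = docs1 docs2 docs3 docs4 docs5

lemma leq_refl[simp]: "X \<in> Ob C \<Longrightarrow> x \<in> Car P X \<Longrightarrow> Leq P X x x"
  using docs(1) by blast
lemma leq_trans: "X \<in> Ob C \<Longrightarrow> x \<in> Car P X \<Longrightarrow> y \<in> Car P X \<Longrightarrow> z \<in> Car P X \<Longrightarrow>
    Leq P X x y \<Longrightarrow> Leq P X y z \<Longrightarrow> Leq P X x z"
  using docs(1) by blast
lemma leq_antisym: "X \<in> Ob C \<Longrightarrow> x \<in> Car P X \<Longrightarrow> y \<in> Car P X \<Longrightarrow> Leq P X x y \<Longrightarrow> Leq P X y x \<Longrightarrow> x = y"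
  using docs(1) by blast
lemma rdx_car[simp]: "f \<in> Ar C \<Longrightarrow> x \<in> Car P (Cd C f) \<Longrightarrow> X = Dm C f \<Longrightarrow> Rdx P f x \<in> Car P X"
  using docs(2) by blast
lemma rdx_mono: "f \<in> Ar C \<Longrightarrow> x \<in> Car P (Cd C f) \<Longrightarrow> y \<in> Car P (Cd C f) \<Longrightarrow> Leq P (Cd C f) x y \<Longrightarrow>
   Leq P (Dm C f) (Rdx P f x) (Rdx P f y)"
  using docs(3) by blast
lemma rdx_id[simp]: "X \<in> Ob C \<Longrightarrow> x \<in> Car P X \<Longrightarrow> Rdx P (Idt C X) x = x"
  using docs(4) by blast
lemma rdx_comp[simp]: "f \<in> Ar C \<Longrightarrow> g \<in> Ar C \<Longrightarrow> Cd C f = Dm C g \<Longrightarrow> x \<in> Car P (Cd C g) \<Longrightarrow>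
   Rdx P f (Rdx P g x) = Rdx P (Cmp C g f) x"
proof -
  assume a: "f \<in> Ar C" "g \<in> Ar C" "Cd C f = Dm C g" "x \<in> Car P (Cd C g)"
  have "f \<in> hom C (Dm C f) (Cd C f)" "g \<in> hom C (Cd C f) (Cd C g)" using a by (auto simp: hom_iff)
  then have "\<forall>x\<in>Car P (Cd C g). Rdx P (Cmp C g f) x = Rdx P f (Rdx P g x)" using docs(5) by blast
  then show ?thesis using a by simp
qed

definition fa where "fa = (SOME u. (\<forall>A\<in>Ob C. \<forall>B\<in>Ob C. is_forall C P A B (u A B)) \<and>
          (\<forall>A A' B f. f \<in> hom C A' A \<longrightarrow> B \<in> Ob C \<longrightarrow>
             (\<forall>y\<in>Car P (Prd C A B).
                Rdx P f (u A B y) = u A' B (Rdx P (times C f (Idt C B)) y))))"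

lemma fa_prop: "(\<forall>A\<in>Ob C. \<forall>B\<in>Ob C. is_forall C P A B (fa A B)) \<and>
          (\<forall>A A' B f. f \<in> hom C A' A \<longrightarrow> B \<in> Ob C \<longrightarrow>
             (\<forall>y\<in>Car P (Prd C A B).
                Rdx P f (fa A B y) = fa A' B (Rdx P (times C f (Idt C B)) y)))"
  unfolding fa_def using univ unfolding universal_def by (rule someI_ex[OF conjunct2])

lemma fa_car[simp]: "A \<in> Ob C \<Longrightarrow> B \<in> Ob C \<Longrightarrow> y \<in> Car P (Prd C A B) \<Longrightarrow> fa A B y \<in> Car P A"
  using fa_prop unfolding is_forall_def by blast
lemma fa_adj: "A \<in> Ob C \<Longrightarrow> B \<in> Ob C \<Longrightarrow> x \<in> Car P A \<Longrightarrow> y \<in> Car P (Prd C A B) \<Longrightarrow>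
   Leq P (Prd C A B) (Rdx P (Pr1 C A B) x) y \<longleftrightarrow> Leq P A x (fa A B y)"
  using fa_prop unfolding is_forall_def by blast
lemma fa_bc: "f \<in> Ar C \<Longrightarrow> Cd C f = A \<Longrightarrow> B \<in> Ob C \<Longrightarrow> y \<in> Car P (Prd C A B) \<Longrightarrow>
   Rdx P f (fa A B y) = fa (Dm C f) B (Rdx P (times C f (Idt C B)) y)"
  using fa_prop unfolding hom_iff by blast

lemma forall_unique:
  assumes "is_forall C P A B u" "A \<in> Ob C" "B \<in> Ob C" "y \<in> Car P (Prd C A B)" "t \<in> Car P A"
    "\<forall>x\<in>Car P A. Leq P (Prd C A B) (Rdx P (Pr1 C A B) x) y \<longleftrightarrow> Leq P A x t"
  shows "u y = t"
proof -
  have "u y \<in> Car P A" "\<forall>x\<in>Car P A. Leq P (Prd C A B) (Rdx P (Pr1 C A B) x) y \<longleftrightarrow> Leq P A x (u y)"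
    using assms(1,4) unfolding is_forall_def by blast+
  then show ?thesis using radj_unique[OF doc assms(2) _ assms(5) _ assms(6)] by blast
qed

subsection \<open>Existential completion: elements and classes\<close>

definition els :: "'o \<Rightarrow> ('o \<times> 'e) set" where
  "els A = {p. fst p \<in> Ob C \<and> snd p \<in> Car P (Prd C A (fst p))}"

lemma els_iff[simp]: "(B, \<alpha>) \<in> els A \<longleftrightarrow> B \<in> Ob C \<and> \<alpha> \<in> Car P (Prd C A B)"
  by (simp add: els_def)

lemma exleI:
  assumes "A \<in> Ob C" "B \<in> Ob C" "B' \<in> Ob C" "M \<in> Ar C" "Dm C M = Prd C A B" "Cd C M = Prd C A B'"
    "Cmp C (Pr1 C A B') M = Pr1 C A B" "Leq P (Prd C A B) \<alpha> (Rdx P M \<alpha>')"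
  shows "exle C P A (B, \<alpha>) (B', \<alpha>')"
proof -
  let ?f = "Cmp C (Pr2 C A B') M"
  have "?f \<in> hom C (Prd C A B) B'" using assms by (simp add: hom_iff)
  moreover have "pair C (Pr1 C A B) ?f = M"
    using pair_unique[of M A B'] assms by simp
  ultimately show ?thesis unfolding exle_def using assms(8) by (metis fst_conv snd_conv)
qed

lemma exleE:
  assumes "exle C P A (B, \<alpha>) (B', \<alpha>')" "A \<in> Ob C" "B \<in> Ob C" "B' \<in> Ob C"
  obtains M where "M \<in> Ar C" "Dm C M = Prd C A B" "Cd C M = Prd C A B'"
    "Cmp C (Pr1 C A B') M = Pr1 C A B" "Leq P (Prd C A B) \<alpha> (Rdx P M \<alpha>')"
proof -
  obtain f where f: "f \<in> hom C (Prd C A B) B'" "Leq P (Prd C A B) \<alpha> (Rdx P (pair C (Pr1 C A B) f) \<alpha>')"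
    using assms(1) unfolding exle_def by auto
  show ?thesis
    by (rule that[of "pair C (Pr1 C A B) f"]) (use f assms in \<open>auto simp: hom_iff\<close>)
qed

lemma exle_refl: "A \<in> Ob C \<Longrightarrow> (B, \<alpha>) \<in> els A \<Longrightarrow> exle C P A (B, \<alpha>) (B, \<alpha>)"
  by (rule exleI[where M = "Idt C (Prd C A B)"]) auto

lemma exle_trans:
  assumes "A \<in> Ob C" "(B, \<alpha>) \<in> els A" "(B', \<alpha>') \<in> els A" "(B'', \<alpha>'') \<in> els A"
    "exle C P A (B, \<alpha>) (B', \<alpha>')" "exle C P A (B', \<alpha>') (B'', \<alpha>'')"
  shows "exle C P A (B, \<alpha>) (B'', \<alpha>'')"
proof -
  have ob: "B \<in> Ob C" "B' \<in> Ob C" "B'' \<in> Ob C" and c: "\<alpha> \<in> Car P (Prd C A B)" "\<alpha>' \<in> Car P (Prd C A B')"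
     "\<alpha>'' \<in> Car P (Prd C A B'')" using assms by auto
  obtain M1 where M1: "M1 \<in> Ar C" "Dm C M1 = Prd C A B" "Cd C M1 = Prd C A B'"
    "Cmp C (Pr1 C A B') M1 = Pr1 C A B" "Leq P (Prd C A B) \<alpha> (Rdx P M1 \<alpha>')"
    using exleE[OF assms(5) assms(1) ob(1,2)] by blast
  obtain M2 where M2: "M2 \<in> Ar C" "Dm C M2 = Prd C A B'" "Cd C M2 = Prd C A B''"
    "Cmp C (Pr1 C A B'') M2 = Pr1 C A B'" "Leq P (Prd C A B') \<alpha>' (Rdx P M2 \<alpha>'')"
    using exleE[OF assms(6) assms(1) ob(2,3)] by blast
  show ?thesis
  proof (rule exleI[where M = "Cmp C M2 M1"])
    show "Cmp C (Pr1 C A B'') (Cmp C M2 M1) = Pr1 C A B"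
      using M1 M2 assms(1) ob by (simp add: comp_assoc[symmetric] del: comp_assoc)
    have "Leq P (Prd C A B) (Rdx P M1 \<alpha>') (Rdx P M1 (Rdx P M2 \<alpha>''))"
      using rdx_mono[of M1 \<alpha>' "Rdx P M2 \<alpha>''"] M1 M2 c assms(1) ob by simp
    then show "Leq P (Prd C A B) \<alpha> (Rdx P (Cmp C M2 M1) \<alpha>'')"
      using leq_trans[OF _ c(1) _ _ M1(5)] M1 M2 c assms(1) ob by simp
  qed (use M1 M2 assms(1) ob in auto)
qed

abbreviation cls where "cls A B \<alpha> \<equiv> ex_cls C P A B \<alpha>"

lemma cls_iff: "q \<in> cls A B \<alpha> \<longleftrightarrow> q \<in> els A \<and> exle C P A (B, \<alpha>) q \<and> exle C P A q (B, \<alpha>)"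
  by (auto simp: ex_cls_def els_def)

lemma cls_self: "A \<in> Ob C \<Longrightarrow> (B, \<alpha>) \<in> els A \<Longrightarrow> (B, \<alpha>) \<in> cls A B \<alpha>"
  using exle_refl cls_iff by blast

lemma cls_eqI:
  assumes "A \<in> Ob C" "(B, \<alpha>) \<in> els A" "(B', \<alpha>') \<in> els A"
    "exle C P A (B, \<alpha>) (B', \<alpha>')" "exle C P A (B', \<alpha>') (B, \<alpha>)"
  shows "cls A B \<alpha> = cls A B' \<alpha>'"
proof (intro set_eqI iffI)
  fix q assume "q \<in> cls A B \<alpha>"
  then show "q \<in> cls A B' \<alpha>'" using assms exle_trans[of A] unfolding cls_iff
    by (cases q) blast
next
  fix q assume "q \<in> cls A B' \<alpha>'"
  then show "q \<in> cls A B \<alpha>" using assms exle_trans[of A] unfolding cls_iff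
    by (cases q) blast
qed

lemma cls_eqD:
  assumes "cls A B \<alpha> = cls A B' \<alpha>'" "A \<in> Ob C" "(B, \<alpha>) \<in> els A" "(B', \<alpha>') \<in> els A"
  shows "exle C P A (B, \<alpha>) (B', \<alpha>')" "exle C P A (B', \<alpha>') (B, \<alpha>)"
proof -
  have "(B', \<alpha>') \<in> cls A B \<alpha>" using cls_self[OF assms(2,4)] assms(1) by simp
  then show "exle C P A (B, \<alpha>) (B', \<alpha>')" "exle C P A (B', \<alpha>') (B, \<alpha>)" unfolding cls_iff by auto
qed

lemma car_pex_iff: "s \<in> Car (Pex C P) A \<longleftrightarrow> (\<exists>B \<alpha>. (B, \<alpha>) \<in> els A \<and> s = cls A B \<alpha>)"
  by (auto simp: Car_Pex)

lemma car_pexE: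
  assumes "s \<in> Car (Pex C P) A"
  obtains B \<alpha> where "B \<in> Ob C" "\<alpha> \<in> Car P (Prd C A B)" "s = cls A B \<alpha>"
  using assms by (auto simp: Car_Pex)

lemma cls_car[simp]: "B \<in> Ob C \<Longrightarrow> \<alpha> \<in> Car P (Prd C A B) \<Longrightarrow> cls A B \<alpha> \<in> Car (Pex C P) A"
  by (auto simp: Car_Pex)

lemma leq_pex:
  assumes "A \<in> Ob C" "(B, \<alpha>) \<in> els A" "(B', \<alpha>') \<in> els A"
  shows "Leq (Pex C P) A (cls A B \<alpha>) (cls A B' \<alpha>') \<longleftrightarrow> exle C P A (B, \<alpha>) (B', \<alpha>')"
proof
  assume "Leq (Pex C P) A (cls A B \<alpha>) (cls A B' \<alpha>')"
  then obtain p q where pq: "p \<in> cls A B \<alpha>" "q \<in> cls A B' \<alpha>'" "exle C P A p q"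
    unfolding Leq_Pex by blast
  obtain B1 a1 where p: "p = (B1, a1)" by (cases p)
  obtain B2 a2 where q: "q = (B2, a2)" by (cases q)
  show "exle C P A (B, \<alpha>) (B', \<alpha>')"
    using pq assms exle_trans[of A] unfolding p q cls_iff by meson
next
  assume "exle C P A (B, \<alpha>) (B', \<alpha>')"
  then show "Leq (Pex C P) A (cls A B \<alpha>) (cls A B' \<alpha>')"
    unfolding Leq_Pex using cls_self assms by blast
qed

lemma leq_pexD: "Leq (Pex C P) A (cls A B \<alpha>) (cls A B' \<alpha>') \<Longrightarrow> A \<in> Ob C \<Longrightarrow> B \<in> Ob C \<Longrightarrow>
  \<alpha> \<in> Car P (Prd C A B) \<Longrightarrow> B' \<in> Ob C \<Longrightarrow> \<alpha>' \<in> Car P (Prd C A B') \<Longrightarrow> exle C P A (B, \<alpha>) (B', \<alpha>')"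
  by (subst (asm) leq_pex) auto
lemma leq_pexI: "exle C P A (B, \<alpha>) (B', \<alpha>') \<Longrightarrow> A \<in> Ob C \<Longrightarrow> B \<in> Ob C \<Longrightarrow>
  \<alpha> \<in> Car P (Prd C A B) \<Longrightarrow> B' \<in> Ob C \<Longrightarrow> \<alpha>' \<in> Car P (Prd C A B') \<Longrightarrow> Leq (Pex C P) A (cls A B \<alpha>) (cls A B' \<alpha>')"
  by (subst leq_pex) auto

lemma exle_rdx:
  assumes f: "f \<in> Ar C" "Cd C f = A" and A: "A \<in> Ob C" and els: "(B, \<alpha>) \<in> els A" "(B', \<alpha>') \<in> els A"
    and le: "exle C P A (B, \<alpha>) (B', \<alpha>')"
  shows "exle C P (Dm C f) (B, Rdx P (times C f (Idt C B)) \<alpha>) (B', Rdx P (times C f (Idt C B')) \<alpha>')"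
proof -
  have ob: "B \<in> Ob C" "B' \<in> Ob C" and c: "\<alpha> \<in> Car P (Prd C A B)" "\<alpha>' \<in> Car P (Prd C A B')"
    using els by auto
  let ?A' = "Dm C f"
  obtain M where M: "M \<in> Ar C" "Dm C M = Prd C A B" "Cd C M = Prd C A B'"
    "Cmp C (Pr1 C A B') M = Pr1 C A B" "Leq P (Prd C A B) \<alpha> (Rdx P M \<alpha>')"
    using exleE[OF le A ob] by blast
  have Ml: "Cmp C (Pr1 C A B') (Cmp C M x) = Cmp C (Pr1 C A B) x" if "x \<in> Ar C" "Cd C x = Prd C A B" for x
    using comp_lift[OF M(4)] M that A ob by simp
  let ?fB = "times C f (Idt C B)" and ?fB' = "times C f (Idt C B')"
  let ?M' = "pair C (Pr1 C ?A' B) (Cmp C (Pr2 C A B') (Cmp C M ?fB))"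
  have eq: "Cmp C M ?fB = Cmp C ?fB' ?M'"
    by (rule prod_ext[of _ _ A B']) (simp_all add: f A ob M Ml)
  show ?thesis
  proof (rule exleI[where M = ?M'])
    have "Leq P (Prd C ?A' B) (Rdx P ?fB \<alpha>) (Rdx P ?fB (Rdx P M \<alpha>'))"
      using rdx_mono[of ?fB \<alpha> "Rdx P M \<alpha>'"] M f A ob c by simp
    also have "Rdx P ?fB (Rdx P M \<alpha>') = Rdx P ?M' (Rdx P ?fB' \<alpha>')"
      using M f A ob c eq by simp
    finally show "Leq P (Prd C ?A' B) (Rdx P ?fB \<alpha>) (Rdx P ?M' (Rdx P ?fB' \<alpha>'))" .
  qed (use f A ob M in simp_all)
qed

lemma rdx_pex:
  assumes f: "f \<in> Ar C" "Cd C f = A" and B: "B \<in> Ob C" and \<alpha>: "\<alpha> \<in> Car P (Prd C A B)"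
  shows "Rdx (Pex C P) f (cls A B \<alpha>) = cls (Dm C f) B (Rdx P (times C f (Idt C B)) \<alpha>)"
proof -
  have A: "A \<in> Ob C" using f by auto
  have e: "(B, \<alpha>) \<in> els A" using B \<alpha> by simp
  have "ex_cls C P (Dm C f) (fst p) (Rdx P (times C f (Idt C (fst p))) (snd p))
        = cls (Dm C f) B (Rdx P (times C f (Idt C B)) \<alpha>)" if p: "p \<in> cls A B \<alpha>" for p
  proof -
    obtain B1 a1 where pp: "p = (B1, a1)" by (cases p)
    have p1: "(B1, a1) \<in> els A" "exle C P A (B, \<alpha>) (B1, a1)" "exle C P A (B1, a1) (B, \<alpha>)"
      using p unfolding pp cls_iff by auto
    show ?thesis unfolding pp fst_conv snd_conv
      by (rule cls_eqI) (use p1 e f A B exle_rdx[OF f A] in \<open>auto\<close>)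
  qed
  moreover have "(B, \<alpha>) \<in> cls A B \<alpha>" using cls_self[OF A e] .
  ultimately show ?thesis unfolding Rdx_Pex by auto
qed

lemma pexd_po:
  assumes X: "X \<in> Ob C"
  shows "(\<forall>x\<in>Car (Pex C P) X. Leq (Pex C P) X x x) \<and>
        (\<forall>x\<in>Car (Pex C P) X. \<forall>y\<in>Car (Pex C P) X. \<forall>z\<in>Car (Pex C P) X. Leq (Pex C P) X x y \<longrightarrow> Leq (Pex C P) X y z \<longrightarrow> Leq (Pex C P) X x z) \<and>
        (\<forall>x\<in>Car (Pex C P) X. \<forall>y\<in>Car (Pex C P) X. Leq (Pex C P) X x y \<longrightarrow> Leq (Pex C P) X y x \<longrightarrow> x = y)"
proof (intro conjI ballI impI)
  { fix x assume "x \<in> Car (Pex C P) X"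
    then obtain B \<alpha> where "B \<in> Ob C" "\<alpha> \<in> Car P (Prd C X B)" "x = cls X B \<alpha>" by (rule car_pexE)
    then show "Leq (Pex C P) X x x" by (simp add: leq_pex[OF X] exle_refl[OF X]) }
  { fix x y z assume xyz: "x \<in> Car (Pex C P) X" "y \<in> Car (Pex C P) X" "z \<in> Car (Pex C P) X"
      and le: "Leq (Pex C P) X x y" "Leq (Pex C P) X y z"
    obtain B \<alpha> where x: "B \<in> Ob C" "\<alpha> \<in> Car P (Prd C X B)" "x = cls X B \<alpha>" using xyz(1) by (rule car_pexE)
    obtain B' \<alpha>' where y: "B' \<in> Ob C" "\<alpha>' \<in> Car P (Prd C X B')" "y = cls X B' \<alpha>'" using xyz(2) by (rule car_pexE)
    obtain B'' \<alpha>'' where z: "B'' \<in> Ob C" "\<alpha>'' \<in> Car P (Prd C X B'')" "z = cls X B'' \<alpha>''" using xyz(3) by (rule car_pexE)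
    have "exle C P X (B, \<alpha>) (B', \<alpha>')" "exle C P X (B', \<alpha>') (B'', \<alpha>'')"
      using le unfolding x(3) y(3) z(3) by (auto intro!: leq_pexD X x y z)
    then have "exle C P X (B, \<alpha>) (B'', \<alpha>'')" by (rule exle_trans[OF X, rotated 3]) (simp_all add: x y z)
    then show "Leq (Pex C P) X x z" unfolding x(3) z(3) by (rule leq_pexI) (simp_all add: X x z) }
  { fix x y assume xy: "x \<in> Car (Pex C P) X" "y \<in> Car (Pex C P) X"
      and le: "Leq (Pex C P) X x y" "Leq (Pex C P) X y x"
    obtain B \<alpha> where x: "B \<in> Ob C" "\<alpha> \<in> Car P (Prd C X B)" "x = cls X B \<alpha>" using xy(1) by (rule car_pexE)
    obtain B' \<alpha>' where y: "B' \<in> Ob C" "\<alpha>' \<in> Car P (Prd C X B')" "y = cls X B' \<alpha>'" using xy(2) by (rule car_pexE)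
    have "exle C P X (B, \<alpha>) (B', \<alpha>')" "exle C P X (B', \<alpha>') (B, \<alpha>)"
      using le unfolding x(3) y(3) by (auto intro!: leq_pexD X x y)
    then show "x = y" unfolding x(3) y(3) by (rule cls_eqI[OF X, rotated 2]) (simp_all add: x y) }
qed

lemma pexd_car:
  assumes f: "f \<in> Ar C" and x: "x \<in> Car (Pex C P) (Cd C f)"
  shows "Rdx (Pex C P) f x \<in> Car (Pex C P) (Dm C f)"
proof -
  obtain B \<alpha> where b: "B \<in> Ob C" "\<alpha> \<in> Car P (Prd C (Cd C f) B)" "x = cls (Cd C f) B \<alpha>"
    using x by (rule car_pexE)
  have "Rdx (Pex C P) f x = cls (Dm C f) B (Rdx P (times C f (Idt C B)) \<alpha>)"
    unfolding b(3) by (rule rdx_pex[OF f refl b(1,2)])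
  moreover have "Rdx P (times C f (Idt C B)) \<alpha> \<in> Car P (Prd C (Dm C f) B)"
    by (simp add: f b(1,2))
  ultimately show ?thesis using b(1) by simp
qed

lemma pexd_mono:
  assumes f: "f \<in> Ar C" and x: "x \<in> Car (Pex C P) (Cd C f)" and y: "y \<in> Car (Pex C P) (Cd C f)"
    and le: "Leq (Pex C P) (Cd C f) x y"
  shows "Leq (Pex C P) (Dm C f) (Rdx (Pex C P) f x) (Rdx (Pex C P) f y)"
proof -
  obtain B \<alpha> where b: "B \<in> Ob C" "\<alpha> \<in> Car P (Prd C (Cd C f) B)" "x = cls (Cd C f) B \<alpha>"
    using x by (rule car_pexE)
  obtain B' \<alpha>' where b': "B' \<in> Ob C" "\<alpha>' \<in> Car P (Prd C (Cd C f) B')" "y = cls (Cd C f) B' \<alpha>'"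
    using y by (rule car_pexE)
  have X: "Cd C f \<in> Ob C" "Dm C f \<in> Ob C" using f by auto
  have "exle C P (Cd C f) (B, \<alpha>) (B', \<alpha>')" using le unfolding b(3) b'(3) by (rule leq_pexD) (simp_all add: X b b')
  then have "exle C P (Dm C f) (B, Rdx P (times C f (Idt C B)) \<alpha>) (B', Rdx P (times C f (Idt C B')) \<alpha>')"
    by (rule exle_rdx[OF f refl X(1), rotated 2]) (simp_all add: b b')
  moreover have "Rdx P (times C f (Idt C B)) \<alpha> \<in> Car P (Prd C (Dm C f) B)"
    "Rdx P (times C f (Idt C B')) \<alpha>' \<in> Car P (Prd C (Dm C f) B')"
    by (simp_all add: f b(1,2) b'(1,2))
  ultimately show ?thesis
    unfolding b(3) b'(3) rdx_pex[OF f refl b(1,2)] rdx_pex[OF f refl b'(1,2)]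
    by (intro leq_pexI) (simp_all add: X b(1) b'(1))
qed

lemma pexd_id:
  assumes X: "X \<in> Ob C" and x: "x \<in> Car (Pex C P) X"
  shows "Rdx (Pex C P) (Idt C X) x = x"
proof -
  obtain B \<alpha> where b: "B \<in> Ob C" "\<alpha> \<in> Car P (Prd C X B)" "x = cls X B \<alpha>"
    using x by (rule car_pexE)
  have "Rdx (Pex C P) (Idt C X) x = cls X B (Rdx P (times C (Idt C X) (Idt C B)) \<alpha>)"
    unfolding b(3) by (subst rdx_pex) (simp_all add: X b)
  also have "\<dots> = x" by (simp add: X b)
  finally show ?thesis .
qed

lemma pexd_comp:
  assumes f: "f \<in> Ar C" "Dm C f = X" "Cd C f = Y" and g: "g \<in> Ar C" "Dm C g = Y" "Cd C g = Z"
    and x: "x \<in> Car (Pex C P) Z"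
  shows "Rdx (Pex C P) (Cmp C g f) x = Rdx (Pex C P) f (Rdx (Pex C P) g x)"
proof -
  obtain B \<alpha> where b: "B \<in> Ob C" "\<alpha> \<in> Car P (Prd C Z B)" "x = cls Z B \<alpha>"
    using x by (rule car_pexE)
  have ob[simp]: "X \<in> Ob C" "Y \<in> Ob C" "Z \<in> Ob C" using dm_ob[OF f(1)] dm_ob[OF g(1)] cd_ob[OF g(1)] f g by auto
  have 1: "Rdx (Pex C P) g x = cls Y B (Rdx P (times C g (Idt C B)) \<alpha>)"
    unfolding b(3) rdx_pex[OF g(1,3) b(1,2)] g(2) ..
  have 2: "Rdx (Pex C P) f (Rdx (Pex C P) g x) =
     cls X B (Rdx P (times C f (Idt C B)) (Rdx P (times C g (Idt C B)) \<alpha>))"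
    unfolding 1 by (subst rdx_pex[OF f(1,3) b(1)]) (simp_all add: f g b)
  have 3: "Rdx (Pex C P) (Cmp C g f) x = cls X B (Rdx P (times C (Cmp C g f) (Idt C B)) \<alpha>)"
    unfolding b(3) by (subst rdx_pex[of "Cmp C g f" Z B \<alpha>]) (simp_all add: f g b)
  have "Rdx P (times C f (Idt C B)) (Rdx P (times C g (Idt C B)) \<alpha>) = Rdx P (times C (Cmp C g f) (Idt C B)) \<alpha>"
    by (simp add: f g b)
  then show ?thesis unfolding 2 3 by simp
qed

lemma pex_doctrine: "doctrine C (Pex C P)"
  apply (unfold doctrine_def)
  apply (intro conjI)
      apply (rule ballI, rule pexd_po, assumption)
     apply (intro ballI, rule pexd_car; assumption)
    apply (intro ballI impI, rule pexd_mono; assumption)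
   apply (intro ballI, rule pexd_id; assumption)
  apply (intro allI impI ballI)
  apply (rule pexd_comp)
        apply (simp_all add: hom_iff)
  done

subsection \<open>Universal quantifier of the completion\<close>

definition kk :: "'o \<Rightarrow> 'o \<Rightarrow> 'o \<Rightarrow> 'a \<Rightarrow> 'a" where
  "kk A B E ev = pair C (pair C (Cmp C (Pr1 C A E) (Pr1 C (Prd C A E) B)) (Pr2 C (Prd C A E) B))
     (Cmp C ev (pair C (Cmp C (Pr2 C A E) (Pr1 C (Prd C A E) B)) (Pr2 C (Prd C A E) B)))"

lemma pex_forall_val:
  assumes A: "A \<in> Ob C" and B: "B \<in> Ob C" and C': "C' \<in> Ob C"
    and \<gamma>: "\<gamma> \<in> Car P (Prd C (Prd C A B) C')"
    and ex: "is_exponential C B C' E ev"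
  shows "cls A E (fa (Prd C A E) B (Rdx P (kk A B E ev) \<gamma>)) \<in> Car (Pex C P) A"
    "\<forall>x\<in>Car (Pex C P) A. Leq (Pex C P) (Prd C A B) (Rdx (Pex C P) (Pr1 C A B) x) (cls (Prd C A B) C' \<gamma>)
        \<longleftrightarrow> Leq (Pex C P) A x (cls A E (fa (Prd C A E) B (Rdx P (kk A B E ev) \<gamma>)))"
proof -
  note e[simp] = exp_basic[OF ex]
  note ob[simp] = A B C' \<gamma>
  let ?k = "kk A B E ev"
  have k[simp]: "?k \<in> Ar C" "Dm C ?k = Prd C (Prd C A E) B" "Cd C ?k = Prd C (Prd C A B) C'"
    by (simp_all add: kk_def)
  let ?\<theta> = "Rdx P ?k \<gamma>"
  have \<theta>[simp]: "?\<theta> \<in> Car P (Prd C (Prd C A E) B)" by simp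
  let ?t = "fa (Prd C A E) B ?\<theta>"
  have t[simp]: "?t \<in> Car P (Prd C A E)" by simp
  show "cls A E ?t \<in> Car (Pex C P) A" by simp
  show "\<forall>x\<in>Car (Pex C P) A. Leq (Pex C P) (Prd C A B) (Rdx (Pex C P) (Pr1 C A B) x) (cls (Prd C A B) C' \<gamma>)
        \<longleftrightarrow> Leq (Pex C P) A x (cls A E ?t)"
  proof
    fix x assume "x \<in> Car (Pex C P) A"
    then obtain D \<delta> where D[simp]: "D \<in> Ob C" and \<delta>[simp]: "\<delta> \<in> Car P (Prd C A D)" and x: "x = cls A D \<delta>"
      by (rule car_pexE)
    let ?q = "times C (Pr1 C A B) (Idt C D)"
    have rx: "Rdx (Pex C P) (Pr1 C A B) x = cls (Prd C A B) D (Rdx P ?q \<delta>)"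
      unfolding x by (subst rdx_pex) simp_all
    have qd[simp]: "Rdx P ?q \<delta> \<in> Car P (Prd C (Prd C A B) D)" by simp
    have l1: "Leq (Pex C P) (Prd C A B) (Rdx (Pex C P) (Pr1 C A B) x) (cls (Prd C A B) C' \<gamma>) \<longleftrightarrow>
        exle C P (Prd C A B) (D, Rdx P ?q \<delta>) (C', \<gamma>)"
      unfolding rx by (rule leq_pex) simp_all
    have l2: "Leq (Pex C P) A x (cls A E ?t) \<longleftrightarrow> exle C P A (D, \<delta>) (E, ?t)"
      unfolding x by (rule leq_pex) simp_all
    have "exle C P (Prd C A B) (D, Rdx P ?q \<delta>) (C', \<gamma>) \<longleftrightarrow> exle C P A (D, \<delta>) (E, ?t)"
    proof
      assume "exle C P (Prd C A B) (D, Rdx P ?q \<delta>) (C', \<gamma>)"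
      then obtain M where M: "M \<in> Ar C" "Dm C M = Prd C (Prd C A B) D" "Cd C M = Prd C (Prd C A B) C'"
        "Cmp C (Pr1 C (Prd C A B) C') M = Pr1 C (Prd C A B) D"
        "Leq P (Prd C (Prd C A B) D) (Rdx P ?q \<delta>) (Rdx P M \<gamma>)"
        by (rule exleE) simp_all
      let ?\<sigma> = "pair C (pair C (Cmp C (Pr1 C A D) (Pr1 C (Prd C A D) B)) (Pr2 C (Prd C A D) B))
                    (Cmp C (Pr2 C A D) (Pr1 C (Prd C A D) B))"
      have \<sigma>[simp]: "?\<sigma> \<in> Ar C" "Dm C ?\<sigma> = Prd C (Prd C A D) B" "Cd C ?\<sigma> = Prd C (Prd C A B) D"
        by simp_all
      have "\<exists>g. g \<in> Ar C \<and> Dm C g = Prd C A D \<and> Cd C g = E \<and>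
         Cmp C ev (pair C (Cmp C g (Pr1 C (Prd C A D) B)) (Pr2 C (Prd C A D) B)) =
           Cmp C (Pr2 C (Prd C A B) C') (Cmp C M ?\<sigma>)"
        by (rule exp_curry[OF ex]) (simp_all add: M)
      then obtain g where g: "g \<in> Ar C" "Dm C g = Prd C A D" "Cd C g = E"
         "Cmp C ev (pair C (Cmp C g (Pr1 C (Prd C A D) B)) (Pr2 C (Prd C A D) B)) =
           Cmp C (Pr2 C (Prd C A B) C') (Cmp C M ?\<sigma>)" by blast
      let ?N = "pair C (Pr1 C A D) g"
      have N[simp]: "?N \<in> Ar C" "Dm C ?N = Prd C A D" "Cd C ?N = Prd C A E" by (simp_all add: g)
      have Ml: "Cmp C (Pr1 C (Prd C A B) C') (Cmp C M y) = Cmp C (Pr1 C (Prd C A B) D) y"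
        if "y \<in> Ar C" "Cd C y = Prd C (Prd C A B) D" for y
        by (rule comp_lift[OF M(4)]) (simp_all add: M that)
      have eqM: "Cmp C M ?\<sigma> = Cmp C ?k (times C ?N (Idt C B))"
        by (rule prod_ext[of _ _ "Prd C A B" C']) (simp_all add: M g Ml kk_def)
      show "exle C P A (D, \<delta>) (E, ?t)"
      proof (rule exleI[where M = ?N])
        have L: "Leq P (Prd C (Prd C A D) B) (Rdx P (Pr1 C (Prd C A D) B) \<delta>) (Rdx P (times C ?N (Idt C B)) ?\<theta>)"
        proof -
          have "Leq P (Dm C ?\<sigma>) (Rdx P ?\<sigma> (Rdx P ?q \<delta>)) (Rdx P ?\<sigma> (Rdx P M \<gamma>))"
            by (rule rdx_mono) (insert M, simp_all)
          moreover have "Rdx P ?\<sigma> (Rdx P ?q \<delta>) = Rdx P (Pr1 C (Prd C A D) B) \<delta>" by simp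
          moreover have "Rdx P ?\<sigma> (Rdx P M \<gamma>) = Rdx P (times C ?N (Idt C B)) ?\<theta>"
          proof -
            have "Rdx P ?\<sigma> (Rdx P M \<gamma>) = Rdx P (Cmp C M ?\<sigma>) \<gamma>" by (rule rdx_comp) (simp_all add: M)
            also have "\<dots> = Rdx P (Cmp C ?k (times C ?N (Idt C B))) \<gamma>" by (simp only: eqM)
            also have "\<dots> = Rdx P (times C ?N (Idt C B)) ?\<theta>" by (rule rdx_comp[symmetric]) simp_all
            finally show ?thesis .
          qed
          ultimately show ?thesis by simp
        qed
        have "Leq P (Prd C A D) \<delta> (fa (Prd C A D) B (Rdx P (times C ?N (Idt C B)) ?\<theta>))"
          using L by (rule fa_adj[THEN iffD1, rotated 4]) simp_all
        moreover have "Rdx P ?N ?t = fa (Prd C A D) B (Rdx P (times C ?N (Idt C B)) ?\<theta>)"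
          by (subst fa_bc) simp_all
        ultimately show "Leq P (Prd C A D) \<delta> (Rdx P ?N ?t)" by simp
      qed (simp_all add: g)
    next
      assume "exle C P A (D, \<delta>) (E, ?t)"
      then obtain N where N: "N \<in> Ar C" "Dm C N = Prd C A D" "Cd C N = Prd C A E"
        "Cmp C (Pr1 C A E) N = Pr1 C A D" "Leq P (Prd C A D) \<delta> (Rdx P N ?t)"
        by (rule exleE) simp_all
      have Nl: "Cmp C (Pr1 C A E) (Cmp C N y) = Cmp C (Pr1 C A D) y"
        if "y \<in> Ar C" "Cd C y = Prd C A D" for y
        by (rule comp_lift[OF N(4)]) (simp_all add: N that)
      have "Rdx P N ?t = fa (Prd C A D) B (Rdx P (times C N (Idt C B)) ?\<theta>)"
        by (subst fa_bc) (simp_all add: N)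
      then have "Leq P (Prd C A D) \<delta> (fa (Prd C A D) B (Rdx P (times C N (Idt C B)) ?\<theta>))"
        using N(5) by simp
      then have L: "Leq P (Prd C (Prd C A D) B) (Rdx P (Pr1 C (Prd C A D) B) \<delta>) (Rdx P (times C N (Idt C B)) ?\<theta>)"
        by (rule fa_adj[THEN iffD2, rotated 4]) (simp_all add: N)
      let ?\<sigma> = "pair C (pair C (Cmp C (Pr1 C A B) (Pr1 C (Prd C A B) D)) (Pr2 C (Prd C A B) D))
                    (Cmp C (Pr2 C A B) (Pr1 C (Prd C A B) D))"
      have \<sigma>[simp]: "?\<sigma> \<in> Ar C" "Dm C ?\<sigma> = Prd C (Prd C A B) D" "Cd C ?\<sigma> = Prd C (Prd C A D) B"
        by simp_all
      let ?M = "Cmp C ?k (Cmp C (times C N (Idt C B)) ?\<sigma>)"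
      show "exle C P (Prd C A B) (D, Rdx P ?q \<delta>) (C', \<gamma>)"
      proof (rule exleI[where M = ?M])
        show "Cmp C (Pr1 C (Prd C A B) C') ?M = Pr1 C (Prd C A B) D"
          by (simp add: N Nl kk_def)
        have "Leq P (Dm C ?\<sigma>) (Rdx P ?\<sigma> (Rdx P (Pr1 C (Prd C A D) B) \<delta>)) (Rdx P ?\<sigma> (Rdx P (times C N (Idt C B)) ?\<theta>))"
          by (rule rdx_mono) (insert N L, simp_all)
        moreover have "Rdx P ?\<sigma> (Rdx P (Pr1 C (Prd C A D) B) \<delta>) = Rdx P ?q \<delta>" by simp
        moreover have "Rdx P ?\<sigma> (Rdx P (times C N (Idt C B)) ?\<theta>) = Rdx P ?M \<gamma>"
          by (simp add: N)
        ultimately show "Leq P (Prd C (Prd C A B) D) (Rdx P ?q \<delta>) (Rdx P ?M \<gamma>)" by simp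
      qed (simp_all add: N)
    qed
    then show "Leq (Pex C P) (Prd C A B) (Rdx (Pex C P) (Pr1 C A B) x) (cls (Prd C A B) C' \<gamma>)
        \<longleftrightarrow> Leq (Pex C P) A x (cls A E ?t)" using l1 l2 by simp
  qed
qed

definition fax :: "'o \<Rightarrow> 'o \<Rightarrow> ('o \<times> 'e) set \<Rightarrow> ('o \<times> 'e) set" where
  "fax A B s = (SOME t. t \<in> Car (Pex C P) A \<and>
     (\<forall>x\<in>Car (Pex C P) A. Leq (Pex C P) (Prd C A B) (Rdx (Pex C P) (Pr1 C A B) x) s \<longleftrightarrow> Leq (Pex C P) A x t))"

lemma fax_eq:
  assumes A: "A \<in> Ob C" and B: "B \<in> Ob C" and C': "C' \<in> Ob C"
    and \<gamma>: "\<gamma> \<in> Car P (Prd C (Prd C A B) C')"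
    and ex: "is_exponential C B C' E ev"
  shows "fax A B (cls (Prd C A B) C' \<gamma>) = cls A E (fa (Prd C A E) B (Rdx P (kk A B E ev) \<gamma>))"
proof -
  note v = pex_forall_val[OF A B C' \<gamma> ex]
  let ?R = "\<lambda>t. t \<in> Car (Pex C P) A \<and>
     (\<forall>x\<in>Car (Pex C P) A. Leq (Pex C P) (Prd C A B) (Rdx (Pex C P) (Pr1 C A B) x) (cls (Prd C A B) C' \<gamma>) \<longleftrightarrow> Leq (Pex C P) A x t)"
  have r0: "?R (cls A E (fa (Prd C A E) B (Rdx P (kk A B E ev) \<gamma>)))" by (rule conjI[OF v(1) v(2)])
  have r1: "?R (fax A B (cls (Prd C A B) C' \<gamma>))" unfolding fax_def by (rule someI[of ?R, OF r0])
  show ?thesis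
    by (rule radj_unique[OF pex_doctrine A conjunct1[OF r1] conjunct1[OF r0] conjunct2[OF r1] conjunct2[OF r0]])
qed

lemma exp_some:
  assumes "B \<in> Ob C" "D \<in> Ob C"
  obtains E ev where "is_exponential C B D E ev"
  using exps assms unfolding has_exponents_def by blast

lemma fax_forall: "A \<in> Ob C \<Longrightarrow> B \<in> Ob C \<Longrightarrow> is_forall C (Pex C P) A B (fax A B)"
  unfolding is_forall_def
proof (intro conjI ballI)
  fix y assume A: "A \<in> Ob C" and B: "B \<in> Ob C" and y: "y \<in> Car (Pex C P) (Prd C A B)"
  obtain C' \<gamma> where c: "C' \<in> Ob C" "\<gamma> \<in> Car P (Prd C (Prd C A B) C')" "y = cls (Prd C A B) C' \<gamma>"
    using y by (rule car_pexE)
  obtain E ev where ex: "is_exponential C B C' E ev" using exp_some[OF B c(1)] .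
  note v = pex_forall_val[OF A B c(1,2) ex]
  show "fax A B y \<in> Car (Pex C P) A" unfolding c(3) fax_eq[OF A B c(1,2) ex] by (rule v(1))
  fix x assume "x \<in> Car (Pex C P) A"
  then show "Leq (Pex C P) (Prd C A B) (Rdx (Pex C P) (Pr1 C A B) x) y = Leq (Pex C P) A x (fax A B y)"
    unfolding c(3) fax_eq[OF A B c(1,2) ex] by (rule bspec[OF v(2)])
qed

lemma fax_bc:
  assumes f: "f \<in> Ar C" "Cd C f = A" and B: "B \<in> Ob C" and y: "y \<in> Car (Pex C P) (Prd C A B)"
  shows "Rdx (Pex C P) f (fax A B y) = fax (Dm C f) B (Rdx (Pex C P) (times C f (Idt C B)) y)"
proof -
  have A[simp]: "A \<in> Ob C" "Dm C f \<in> Ob C" using f by auto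
  note f[simp] B[simp]
  obtain C' \<gamma> where c[simp]: "C' \<in> Ob C" "\<gamma> \<in> Car P (Prd C (Prd C A B) C')" and yc: "y = cls (Prd C A B) C' \<gamma>"
    using y by (rule car_pexE)
  obtain E ev where ex: "is_exponential C B C' E ev" using exp_some[OF B c(1)] .
  note e[simp] = exp_basic[OF ex]
  let ?A' = "Dm C f"
  let ?fE = "times C f (Idt C E)" and ?fB = "times C f (Idt C B)"
  have k[simp]: "kk A B E ev \<in> Ar C" "Dm C (kk A B E ev) = Prd C (Prd C A E) B" "Cd C (kk A B E ev) = Prd C (Prd C A B) C'"
    "kk ?A' B E ev \<in> Ar C" "Dm C (kk ?A' B E ev) = Prd C (Prd C ?A' E) B" "Cd C (kk ?A' B E ev) = Prd C (Prd C ?A' B) C'"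
    by (simp_all add: kk_def)
  have "Rdx (Pex C P) f (fax A B y) = cls ?A' E (Rdx P ?fE (fa (Prd C A E) B (Rdx P (kk A B E ev) \<gamma>)))"
    unfolding yc fax_eq[OF A(1) B c(1,2) ex] by (subst rdx_pex) simp_all
  also have "\<dots> = cls ?A' E (fa (Prd C ?A' E) B (Rdx P (times C ?fE (Idt C B)) (Rdx P (kk A B E ev) \<gamma>)))"
    by (subst fa_bc) simp_all
  also have "\<dots> = cls ?A' E (fa (Prd C ?A' E) B (Rdx P (kk ?A' B E ev) (Rdx P (times C ?fB (Idt C C')) \<gamma>)))"
  proof -
    have "Cmp C (kk A B E ev) (times C ?fE (Idt C B)) = Cmp C (times C ?fB (Idt C C')) (kk ?A' B E ev)"
      by (simp add: kk_def)
    then show ?thesis by simp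
  qed
  also have "\<dots> = fax ?A' B (cls (Prd C ?A' B) C' (Rdx P (times C ?fB (Idt C C')) \<gamma>))"
    by (subst fax_eq[OF A(2) B c(1) _ ex]) simp_all
  also have "\<dots> = fax ?A' B (Rdx (Pex C P) ?fB y)"
    unfolding yc by (subst rdx_pex) simp_all
  finally show ?thesis .
qed

lemma pex_universal: "universal C (Pex C P)"
  unfolding universal_def
proof (intro conjI exI[of _ fax])
  show "doctrine C (Pex C P)" by (rule pex_doctrine)
  show "\<forall>A\<in>Ob C. \<forall>B\<in>Ob C. is_forall C (Pex C P) A B (fax A B)" using fax_forall by blast
  show "\<forall>A A' B f. f \<in> hom C A' A \<longrightarrow> B \<in> Ob C \<longrightarrow> (\<forall>y\<in>Car (Pex C P) (Prd C A B).
     Rdx (Pex C P) f (fax A B y) = fax A' B (Rdx (Pex C P) (times C f (Idt C B)) y))"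
  proof (intro allI impI ballI)
    fix A A' B f y assume f: "f \<in> hom C A' A" and B: "B \<in> Ob C" and y: "y \<in> Car (Pex C P) (Prd C A B)"
    have f': "f \<in> Ar C" "Cd C f = A" "Dm C f = A'" using f by (auto simp: hom_iff)
    show "Rdx (Pex C P) f (fax A B y) = fax A' B (Rdx (Pex C P) (times C f (Idt C B)) y)"
      using fax_bc[OF f'(1,2) B y] f'(3) by simp
  qed
qed

lemma pex_ud: "ud C (Pex C P)"
  by unfold_locales (rule exps, rule pex_doctrine, rule pex_universal)

end




context cc begin

lemma id_functor: "is_functor C C id id"
  unfolding is_functor_def by (auto simp: hom_iff)

lemma cmpr_id[simp]: "A \<in> Ob C \<Longrightarrow> B \<in> Ob C \<Longrightarrow> cmpr C C id id A B = Idt C (Prd C A B)"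
  by (simp add: cmpr_def)

lemma id_pres_products: "preserves_products C C id id"
  unfolding preserves_products_def
proof (intro conjI ballI)
  fix Y assume "Y \<in> Ob C"
  then show "\<exists>!h. h \<in> hom C Y (id (Trm C))"
    using fp unfolding fin_products_def by simp
next
  fix A B assume "A \<in> Ob C" "B \<in> Ob C"
  then show "iso_ar C (cmpr C C id id A B)"
    unfolding iso_ar_def by (auto simp: hom_iff intro!: bexI[of _ "Idt C (Prd C A B)"])
qed

lemma id_pres_exponents: "preserves_exponents C C id id"
  unfolding preserves_exponents_def
proof (intro allI impI)
  fix B E' E ev assume B: "B \<in> Ob C" and "E' \<in> Ob C" and ex: "is_exponential C B E' E ev"
  note e = exp_basic[OF ex]
  have "Cmp C (id ev) (inv_ar C (cmpr C C id id (id E) (id B))) = ev"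
    using e B by simp
  then show "is_exponential C (id B) (id E') (id E) (Cmp C (id ev) (inv_ar C (cmpr C C id id E B)))"
    using ex by simp
qed

end

context ud begin

lemma rdx_mono': "f \<in> Ar C \<Longrightarrow> X = Dm C f \<Longrightarrow> Y = Cd C f \<Longrightarrow> x \<in> Car P Y \<Longrightarrow> y \<in> Car P Y \<Longrightarrow>
  Leq P Y x y \<Longrightarrow> Leq P X (Rdx P f x) (Rdx P f y)"
  using rdx_mono by simp

subsection \<open>Existential quantifier of the completion\<close>

definition as :: "'o \<Rightarrow> 'o \<Rightarrow> 'o \<Rightarrow> 'a" where
  "as A B D = pair C (pair C (Pr1 C A (Prd C B D)) (Cmp C (Pr1 C B D) (Pr2 C A (Prd C B D))))
                      (Cmp C (Pr2 C B D) (Pr2 C A (Prd C B D)))"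
definition as' :: "'o \<Rightarrow> 'o \<Rightarrow> 'o \<Rightarrow> 'a" where
  "as' A B D = pair C (Cmp C (Pr1 C A B) (Pr1 C (Prd C A B) D))
     (pair C (Cmp C (Pr2 C A B) (Pr1 C (Prd C A B) D)) (Pr2 C (Prd C A B) D))"

lemma as_ar[simp]: "A \<in> Ob C \<Longrightarrow> B \<in> Ob C \<Longrightarrow> D \<in> Ob C \<Longrightarrow> as A B D \<in> Ar C"
  "A \<in> Ob C \<Longrightarrow> B \<in> Ob C \<Longrightarrow> D \<in> Ob C \<Longrightarrow> Dm C (as A B D) = Prd C A (Prd C B D)"
  "A \<in> Ob C \<Longrightarrow> B \<in> Ob C \<Longrightarrow> D \<in> Ob C \<Longrightarrow> Cd C (as A B D) = Prd C (Prd C A B) D"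
  "A \<in> Ob C \<Longrightarrow> B \<in> Ob C \<Longrightarrow> D \<in> Ob C \<Longrightarrow> as' A B D \<in> Ar C"
  "A \<in> Ob C \<Longrightarrow> B \<in> Ob C \<Longrightarrow> D \<in> Ob C \<Longrightarrow> Dm C (as' A B D) = Prd C (Prd C A B) D"
  "A \<in> Ob C \<Longrightarrow> B \<in> Ob C \<Longrightarrow> D \<in> Ob C \<Longrightarrow> Cd C (as' A B D) = Prd C A (Prd C B D)"
  by (simp_all add: as_def as'_def)

lemma as_inv: "A \<in> Ob C \<Longrightarrow> B \<in> Ob C \<Longrightarrow> D \<in> Ob C \<Longrightarrow> Cmp C (as A B D) (as' A B D) = Idt C (Prd C (Prd C A B) D)"
  "A \<in> Ob C \<Longrightarrow> B \<in> Ob C \<Longrightarrow> D \<in> Ob C \<Longrightarrow> Cmp C (as' A B D) (as A B D) = Idt C (Prd C A (Prd C B D))"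
  by (simp_all add: as_def as'_def)

lemma pex_exists_val:
  assumes A: "A \<in> Ob C" and B: "B \<in> Ob C" and C': "C' \<in> Ob C"
    and \<gamma>: "\<gamma> \<in> Car P (Prd C (Prd C A B) C')"
  shows "is_exists_val C (Pex C P) A B (cls (Prd C A B) C' \<gamma>) (cls A (Prd C B C') (Rdx P (as A B C') \<gamma>))"
  unfolding is_exists_val_def
proof (intro conjI ballI)
  note ob[simp] = A B C' \<gamma>
  let ?a = "as A B C'" and ?a' = "as' A B C'"
  have g1[simp]: "Rdx P ?a \<gamma> \<in> Car P (Prd C A (Prd C B C'))" by simp
  show "cls A (Prd C B C') (Rdx P ?a \<gamma>) \<in> Car (Pex C P) A" by simp
  fix w assume "w \<in> Car (Pex C P) A"
  then obtain D \<delta> where D[simp]: "D \<in> Ob C" and \<delta>[simp]: "\<delta> \<in> Car P (Prd C A D)" and w: "w = cls A D \<delta>"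
    by (rule car_pexE)
  let ?q = "times C (Pr1 C A B) (Idt C D)"
  have rw: "Rdx (Pex C P) (Pr1 C A B) w = cls (Prd C A B) D (Rdx P ?q \<delta>)"
    unfolding w by (subst rdx_pex) simp_all
  have qd[simp]: "Rdx P ?q \<delta> \<in> Car P (Prd C (Prd C A B) D)" by simp
  have l1: "Leq (Pex C P) A (cls A (Prd C B C') (Rdx P ?a \<gamma>)) w \<longleftrightarrow> exle C P A (Prd C B C', Rdx P ?a \<gamma>) (D, \<delta>)"
    unfolding w by (rule leq_pex) simp_all
  have l2: "Leq (Pex C P) (Prd C A B) (cls (Prd C A B) C' \<gamma>) (Rdx (Pex C P) (Pr1 C A B) w) \<longleftrightarrow>
      exle C P (Prd C A B) (C', \<gamma>) (D, Rdx P ?q \<delta>)"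
    unfolding rw by (rule leq_pex) simp_all
  have "exle C P A (Prd C B C', Rdx P ?a \<gamma>) (D, \<delta>) \<longleftrightarrow> exle C P (Prd C A B) (C', \<gamma>) (D, Rdx P ?q \<delta>)"
  proof
    assume "exle C P A (Prd C B C', Rdx P ?a \<gamma>) (D, \<delta>)"
    then obtain M where M: "M \<in> Ar C" "Dm C M = Prd C A (Prd C B C')" "Cd C M = Prd C A D"
        "Cmp C (Pr1 C A D) M = Pr1 C A (Prd C B C')" "Leq P (Prd C A (Prd C B C')) (Rdx P ?a \<gamma>) (Rdx P M \<delta>)"
      by (rule exleE) simp_all
    have Ml: "Cmp C (Pr1 C A D) (Cmp C M y) = Cmp C (Pr1 C A (Prd C B C')) y"
      if "y \<in> Ar C" "Cd C y = Prd C A (Prd C B C')" for y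
      by (rule comp_lift[OF M(4)]) (simp_all add: M that)
    let ?N = "pair C (Pr1 C (Prd C A B) C') (Cmp C (Pr2 C A D) (Cmp C M ?a'))"
    show "exle C P (Prd C A B) (C', \<gamma>) (D, Rdx P ?q \<delta>)"
    proof (rule exleI[where M = ?N])
      have "Leq P (Dm C ?a') (Rdx P ?a' (Rdx P ?a \<gamma>)) (Rdx P ?a' (Rdx P M \<delta>))"
        by (rule rdx_mono) (insert M, simp_all)
      moreover have "Rdx P ?a' (Rdx P ?a \<gamma>) = \<gamma>" by (simp add: as_inv)
      moreover have "Rdx P ?a' (Rdx P M \<delta>) = Rdx P ?N (Rdx P ?q \<delta>)"
      proof -
        have "Cmp C M ?a' = Cmp C ?q ?N"
          by (rule prod_ext[of _ _ A D]) (simp_all add: M Ml as'_def)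
        then show ?thesis by (simp add: M)
      qed
      ultimately show "Leq P (Prd C (Prd C A B) C') \<gamma> (Rdx P ?N (Rdx P ?q \<delta>))" by simp
    qed (simp_all add: M as'_def)
  next
    assume "exle C P (Prd C A B) (C', \<gamma>) (D, Rdx P ?q \<delta>)"
    then obtain N where N: "N \<in> Ar C" "Dm C N = Prd C (Prd C A B) C'" "Cd C N = Prd C (Prd C A B) D"
        "Cmp C (Pr1 C (Prd C A B) D) N = Pr1 C (Prd C A B) C'" "Leq P (Prd C (Prd C A B) C') \<gamma> (Rdx P N (Rdx P ?q \<delta>))"
      by (rule exleE) simp_all
    have Nl: "Cmp C (Pr1 C (Prd C A B) D) (Cmp C N y) = Cmp C (Pr1 C (Prd C A B) C') y"
      if "y \<in> Ar C" "Cd C y = Prd C (Prd C A B) C'" for y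
      by (rule comp_lift[OF N(4)]) (simp_all add: N that)
    let ?M = "Cmp C ?q (Cmp C N ?a)"
    show "exle C P A (Prd C B C', Rdx P ?a \<gamma>) (D, \<delta>)"
    proof (rule exleI[where M = ?M])
      show "Cmp C (Pr1 C A D) ?M = Pr1 C A (Prd C B C')"
        by (simp add: N Nl as_def)
      have "Leq P (Dm C ?a) (Rdx P ?a \<gamma>) (Rdx P ?a (Rdx P N (Rdx P ?q \<delta>)))"
        by (rule rdx_mono) (insert N, simp_all)
      moreover have "Rdx P ?a (Rdx P N (Rdx P ?q \<delta>)) = Rdx P ?M \<delta>" by (simp add: N Nl)
      ultimately show "Leq P (Prd C A (Prd C B C')) (Rdx P ?a \<gamma>) (Rdx P ?M \<delta>)" by simp
    qed (simp_all add: N)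
  qed
  then show "Leq (Pex C P) A (cls A (Prd C B C') (Rdx P ?a \<gamma>)) w =
     Leq (Pex C P) (Prd C A B) (cls (Prd C A B) C' \<gamma>) (Rdx (Pex C P) (Pr1 C A B) w)"
    using l1 l2 by simp
qed

lemma ex_val_mono:
  assumes A: "A \<in> Ob C" and B: "B \<in> Ob C" "B' \<in> Ob C"
    and y: "y \<in> Car P (Prd C A B)" "y' \<in> Car P (Prd C A B')"
    and z: "is_exists_val C P A B y z" and z': "is_exists_val C P A B' y' z'"
    and le: "exle C P A (B, y) (B', y')"
  shows "Leq P A z z'"
proof -
  have zc: "z \<in> Car P A" "z' \<in> Car P A" using z z' unfolding is_exists_val_def by auto
  have zz: "\<forall>w\<in>Car P A. Leq P A z w \<longleftrightarrow> Leq P (Prd C A B) y (Rdx P (Pr1 C A B) w)"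
    using z unfolding is_exists_val_def by blast
  have zz': "\<forall>w\<in>Car P A. Leq P A z' w \<longleftrightarrow> Leq P (Prd C A B') y' (Rdx P (Pr1 C A B') w)"
    using z' unfolding is_exists_val_def by blast
  have y'z': "Leq P (Prd C A B') y' (Rdx P (Pr1 C A B') z')" using bspec[OF zz' zc(2)] zc A by simp
  obtain M where M: "M \<in> Ar C" "Dm C M = Prd C A B" "Cd C M = Prd C A B'"
    "Cmp C (Pr1 C A B') M = Pr1 C A B" "Leq P (Prd C A B) y (Rdx P M y')"
    using exleE[OF le A B] by blast
  have "Leq P (Dm C M) (Rdx P M y') (Rdx P M (Rdx P (Pr1 C A B') z'))"
    by (rule rdx_mono) (insert M y'z' zc y A B, simp_all)
  moreover have "Rdx P M (Rdx P (Pr1 C A B') z') = Rdx P (Pr1 C A B) z'"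
    using M zc A B by simp
  ultimately have "Leq P (Prd C A B) y (Rdx P (Pr1 C A B) z')"
    using leq_trans[OF _ y(1) _ _ M(5)] M zc y A B by simp
  then show ?thesis using bspec[OF zz zc(2)] by simp
qed

subsection \<open>The unit\<close>

lemma exle_trm:
  assumes A: "A \<in> Ob C" and D: "D \<in> Ob C" and \<delta>: "\<delta> \<in> Car P (Prd C A D)" and \<beta>: "\<beta> \<in> Car P A"
  shows "exle C P A (D, \<delta>) (Trm C, Rdx P (Pr1 C A (Trm C)) \<beta>) \<longleftrightarrow> Leq P (Prd C A D) \<delta> (Rdx P (Pr1 C A D) \<beta>)"
proof
  assume "exle C P A (D, \<delta>) (Trm C, Rdx P (Pr1 C A (Trm C)) \<beta>)"
  then obtain M where M: "M \<in> Ar C" "Dm C M = Prd C A D" "Cd C M = Prd C A (Trm C)"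
    "Cmp C (Pr1 C A (Trm C)) M = Pr1 C A D" "Leq P (Prd C A D) \<delta> (Rdx P M (Rdx P (Pr1 C A (Trm C)) \<beta>))"
    by (rule exleE) (simp_all add: A D)
  have "Rdx P M (Rdx P (Pr1 C A (Trm C)) \<beta>) = Rdx P (Pr1 C A D) \<beta>" using M A \<beta> by simp
  then show "Leq P (Prd C A D) \<delta> (Rdx P (Pr1 C A D) \<beta>)" using M(5) by simp
next
  assume L: "Leq P (Prd C A D) \<delta> (Rdx P (Pr1 C A D) \<beta>)"
  show "exle C P A (D, \<delta>) (Trm C, Rdx P (Pr1 C A (Trm C)) \<beta>)"
  proof (rule exleI[where M = "pair C (Pr1 C A D) (trm (Prd C A D))"])
    have "Rdx P (pair C (Pr1 C A D) (trm (Prd C A D))) (Rdx P (Pr1 C A (Trm C)) \<beta>) = Rdx P (Pr1 C A D) \<beta>"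
      using A D \<beta> by simp
    then show "Leq P (Prd C A D) \<delta> (Rdx P (pair C (Pr1 C A D) (trm (Prd C A D))) (Rdx P (Pr1 C A (Trm C)) \<beta>))"
      using L by simp
  qed (simp_all add: A D)
qed

lemma eta_car[simp]: "A \<in> Ob C \<Longrightarrow> \<alpha> \<in> Car P A \<Longrightarrow> eta C P A \<alpha> \<in> Car (Pex C P) A"
  unfolding eta_def by simp

lemma eta_mono: "A \<in> Ob C \<Longrightarrow> \<alpha> \<in> Car P A \<Longrightarrow> \<beta> \<in> Car P A \<Longrightarrow> Leq P A \<alpha> \<beta> \<Longrightarrow>
   Leq (Pex C P) A (eta C P A \<alpha>) (eta C P A \<beta>)"
  unfolding eta_def
  apply (rule leq_pexI)
       apply (subst exle_trm)
           apply (simp_all)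
  apply (rule rdx_mono')
       apply simp_all
  done

lemma eta_nat: "f \<in> Ar C \<Longrightarrow> x \<in> Car P (Cd C f) \<Longrightarrow>
   eta C P (Dm C f) (Rdx P f x) = Rdx (Pex C P) f (eta C P (Cd C f) x)"
  unfolding eta_def by (subst rdx_pex) simp_all

lemma eta_forall_adj:
  assumes A: "A \<in> Ob C" and B: "B \<in> Ob C" and y: "y \<in> Car P (Prd C A B)"
  shows "\<forall>x\<in>Car (Pex C P) A. Leq (Pex C P) (Prd C A B) (Rdx (Pex C P) (Pr1 C A B) x) (eta C P (Prd C A B) y)
        \<longleftrightarrow> Leq (Pex C P) A x (eta C P A (fa A B y))"
proof
  note ob[simp] = A B y
  fix x assume "x \<in> Car (Pex C P) A"
  then obtain D \<delta> where D[simp]: "D \<in> Ob C" and \<delta>[simp]: "\<delta> \<in> Car P (Prd C A D)" and x: "x = cls A D \<delta>"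
    by (rule car_pexE)
  let ?q = "times C (Pr1 C A B) (Idt C D)"
  have rx: "Rdx (Pex C P) (Pr1 C A B) x = cls (Prd C A B) D (Rdx P ?q \<delta>)"
    unfolding x by (subst rdx_pex) simp_all
  have l1: "Leq (Pex C P) (Prd C A B) (Rdx (Pex C P) (Pr1 C A B) x) (eta C P (Prd C A B) y) \<longleftrightarrow>
     Leq P (Prd C (Prd C A B) D) (Rdx P ?q \<delta>) (Rdx P (Pr1 C (Prd C A B) D) y)"
    unfolding rx eta_def by (subst leq_pex) (simp_all add: exle_trm)
  have l2: "Leq (Pex C P) A x (eta C P A (fa A B y)) \<longleftrightarrow> Leq P (Prd C A D) \<delta> (Rdx P (Pr1 C A D) (fa A B y))"
    unfolding x eta_def by (subst leq_pex) (simp_all add: exle_trm)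
  let ?r = "times C (Pr1 C A D) (Idt C B)"
  have "Rdx P (Pr1 C A D) (fa A B y) = fa (Prd C A D) B (Rdx P ?r y)"
    by (subst fa_bc) simp_all
  then have l3: "Leq (Pex C P) A x (eta C P A (fa A B y)) \<longleftrightarrow>
      Leq P (Prd C (Prd C A D) B) (Rdx P (Pr1 C (Prd C A D) B) \<delta>) (Rdx P ?r y)"
    unfolding l2 by (simp add: fa_adj)
  let ?\<sigma>1 = "pair C (pair C (Cmp C (Pr1 C A B) (Pr1 C (Prd C A B) D)) (Pr2 C (Prd C A B) D))
                    (Cmp C (Pr2 C A B) (Pr1 C (Prd C A B) D))"
  let ?\<sigma>2 = "pair C (pair C (Cmp C (Pr1 C A D) (Pr1 C (Prd C A D) B)) (Pr2 C (Prd C A D) B))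
                    (Cmp C (Pr2 C A D) (Pr1 C (Prd C A D) B))"
  have "Leq P (Prd C (Prd C A B) D) (Rdx P ?q \<delta>) (Rdx P (Pr1 C (Prd C A B) D) y) \<longleftrightarrow>
      Leq P (Prd C (Prd C A D) B) (Rdx P (Pr1 C (Prd C A D) B) \<delta>) (Rdx P ?r y)"
  proof
    assume L: "Leq P (Prd C (Prd C A B) D) (Rdx P ?q \<delta>) (Rdx P (Pr1 C (Prd C A B) D) y)"
    have "Leq P (Dm C ?\<sigma>2) (Rdx P ?\<sigma>2 (Rdx P ?q \<delta>)) (Rdx P ?\<sigma>2 (Rdx P (Pr1 C (Prd C A B) D) y))"
      by (rule rdx_mono) (insert L, simp_all)
    then show "Leq P (Prd C (Prd C A D) B) (Rdx P (Pr1 C (Prd C A D) B) \<delta>) (Rdx P ?r y)" by simp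
  next
    assume L: "Leq P (Prd C (Prd C A D) B) (Rdx P (Pr1 C (Prd C A D) B) \<delta>) (Rdx P ?r y)"
    have "Leq P (Dm C ?\<sigma>1) (Rdx P ?\<sigma>1 (Rdx P (Pr1 C (Prd C A D) B) \<delta>)) (Rdx P ?\<sigma>1 (Rdx P ?r y))"
      by (rule rdx_mono) (insert L, simp_all)
    then show "Leq P (Prd C (Prd C A B) D) (Rdx P ?q \<delta>) (Rdx P (Pr1 C (Prd C A B) D) y)" by simp
  qed
  then show "Leq (Pex C P) (Prd C A B) (Rdx (Pex C P) (Pr1 C A B) x) (eta C P (Prd C A B) y)
        \<longleftrightarrow> Leq (Pex C P) A x (eta C P A (fa A B y))" using l1 l3 by simp
qed

end




context ud begin

lemma forall_unique2: "is_forall C P A B u \<Longrightarrow> is_forall C P A B u' \<Longrightarrow> A \<in> Ob C \<Longrightarrow> B \<in> Ob C \<Longrightarrow>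
  y \<in> Car P (Prd C A B) \<Longrightarrow> u y = u' y"
  apply (rule forall_unique[of A B u y "u' y"])
       apply assumption+
   apply (simp add: is_forall_def)
  apply (simp add: is_forall_def)
  done

subsection \<open>The multiplication\<close>

lemma mu_eq:
  assumes A: "A \<in> Ob C" and C': "C' \<in> Ob C" and C'': "C'' \<in> Ob C"
    and \<gamma>: "\<gamma> \<in> Car P (Prd C (Prd C A C') C'')"
  shows "mu C P A (ex_cls C (Pex C P) A C' (cls (Prd C A C') C'' \<gamma>)) =
     cls A (Prd C C' C'') (Rdx P (as A C' C'') \<gamma>)"
proof -
  interpret pp: ud C "Pex C P" by (rule pex_ud)
  note ob[simp] = A C' C'' \<gamma>
  let ?\<Gamma> = "cls (Prd C A C') C'' \<gamma>"
  let ?z = "cls A (Prd C C' C'') (Rdx P (as A C' C'') \<gamma>)"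
  have \<Gamma>[simp]: "?\<Gamma> \<in> Car (Pex C P) (Prd C A C')" by simp
  have zv: "is_exists_val C (Pex C P) A C' ?\<Gamma> ?z" by (rule pex_exists_val) simp_all
  have self: "(C', ?\<Gamma>) \<in> ex_cls C (Pex C P) A C' ?\<Gamma>" by (rule pp.cls_self) simp_all
  show ?thesis unfolding mu_def
  proof (rule the_equality)
    show "\<exists>p\<in>ex_cls C (Pex C P) A C' ?\<Gamma>. is_exists_val C (Pex C P) A (fst p) (snd p) ?z"
      using self zv by force
  next
    fix z assume "\<exists>p\<in>ex_cls C (Pex C P) A C' ?\<Gamma>. is_exists_val C (Pex C P) A (fst p) (snd p) z"
    then obtain B1 x1 where p: "(B1, x1) \<in> ex_cls C (Pex C P) A C' ?\<Gamma>"
      and zp: "is_exists_val C (Pex C P) A B1 x1 z" by auto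
    have p': "B1 \<in> Ob C" "x1 \<in> Car (Pex C P) (Prd C A B1)"
      "exle C (Pex C P) A (C', ?\<Gamma>) (B1, x1)" "exle C (Pex C P) A (B1, x1) (C', ?\<Gamma>)"
      using p unfolding pp.cls_iff by auto
    have zc: "z \<in> Car (Pex C P) A" "?z \<in> Car (Pex C P) A"
      using zp zv unfolding is_exists_val_def by auto
    have "Leq (Pex C P) A z ?z"
      by (rule pp.ex_val_mono[OF A p'(1) C' p'(2) \<Gamma> zp zv p'(4)])
    moreover have "Leq (Pex C P) A ?z z"
      by (rule pp.ex_val_mono[OF A C' p'(1) \<Gamma> p'(2) zv zp p'(3)])
    ultimately show "z = ?z" by (rule pp.leq_antisym[OF A zc])
  qed
qed

lemma pexpex_carE:
  assumes "s \<in> Car (Pex C (Pex C P)) A" "A \<in> Ob C"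
  obtains C' C'' \<gamma> where "C' \<in> Ob C" "C'' \<in> Ob C" "\<gamma> \<in> Car P (Prd C (Prd C A C') C'')"
    "s = ex_cls C (Pex C P) A C' (cls (Prd C A C') C'' \<gamma>)"
proof -
  interpret pp: ud C "Pex C P" by (rule pex_ud)
  obtain C' \<Gamma> where c: "C' \<in> Ob C" "\<Gamma> \<in> Car (Pex C P) (Prd C A C')" "s = ex_cls C (Pex C P) A C' \<Gamma>"
    using assms(1) by (rule pp.car_pexE)
  obtain C'' \<gamma> where d: "C'' \<in> Ob C" "\<gamma> \<in> Car P (Prd C (Prd C A C') C'')" "\<Gamma> = cls (Prd C A C') C'' \<gamma>"
    using c(2) by (rule car_pexE)
  show ?thesis by (rule that[OF c(1) d(1) d(2)]) (simp add: c(3) d(3))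
qed

lemma mu_car:
  assumes A: "A \<in> Ob C" and s: "s \<in> Car (Pex C (Pex C P)) A"
  shows "mu C P A s \<in> Car (Pex C P) A"
proof -
  obtain C' C'' \<gamma> where c: "C' \<in> Ob C" "C'' \<in> Ob C" "\<gamma> \<in> Car P (Prd C (Prd C A C') C'')"
    "s = ex_cls C (Pex C P) A C' (cls (Prd C A C') C'' \<gamma>)" using pexpex_carE[OF s A] by blast
  show ?thesis unfolding c(4) mu_eq[OF A c(1-3)] using A c by simp
qed

lemma mu_mono:
  assumes A: "A \<in> Ob C" and s: "s \<in> Car (Pex C (Pex C P)) A" and t: "t \<in> Car (Pex C (Pex C P)) A"
    and le: "Leq (Pex C (Pex C P)) A s t"
  shows "Leq (Pex C P) A (mu C P A s) (mu C P A t)"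
proof -
  interpret pp: ud C "Pex C P" by (rule pex_ud)
  obtain C1 C1' \<gamma>1 where c1: "C1 \<in> Ob C" "C1' \<in> Ob C" "\<gamma>1 \<in> Car P (Prd C (Prd C A C1) C1')"
    "s = ex_cls C (Pex C P) A C1 (cls (Prd C A C1) C1' \<gamma>1)" using pexpex_carE[OF s A] by blast
  obtain C2 C2' \<gamma>2 where c2: "C2 \<in> Ob C" "C2' \<in> Ob C" "\<gamma>2 \<in> Car P (Prd C (Prd C A C2) C2')"
    "t = ex_cls C (Pex C P) A C2 (cls (Prd C A C2) C2' \<gamma>2)" using pexpex_carE[OF t A] by blast
  have g1: "cls (Prd C A C1) C1' \<gamma>1 \<in> Car (Pex C P) (Prd C A C1)" using c1 A by simp
  have g2: "cls (Prd C A C2) C2' \<gamma>2 \<in> Car (Pex C P) (Prd C A C2)" using c2 A by simp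
  have ex: "exle C (Pex C P) A (C1, cls (Prd C A C1) C1' \<gamma>1) (C2, cls (Prd C A C2) C2' \<gamma>2)"
    using le unfolding c1(4) c2(4) by (rule pp.leq_pexD[OF _ A c1(1) g1 c2(1) g2])
  show ?thesis unfolding c1(4) c2(4) mu_eq[OF A c1(1-3)] mu_eq[OF A c2(1-3)]
    by (rule pp.ex_val_mono[OF A c1(1) c2(1) g1 g2 _ _ ex]; rule pex_exists_val) (simp_all add: A c1 c2)
qed

lemma mu_nat:
  assumes f: "f \<in> Ar C" and s: "s \<in> Car (Pex C (Pex C P)) (Cd C f)"
  shows "mu C P (Dm C f) (Rdx (Pex C (Pex C P)) f s) = Rdx (Pex C P) f (mu C P (Cd C f) s)"
proof -
  interpret pp: ud C "Pex C P" by (rule pex_ud)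
  let ?A = "Cd C f" and ?A' = "Dm C f"
  have A[simp]: "?A \<in> Ob C" "?A' \<in> Ob C" using f by auto
  note f[simp]
  obtain C' C'' \<gamma> where c[simp]: "C' \<in> Ob C" "C'' \<in> Ob C" "\<gamma> \<in> Car P (Prd C (Prd C ?A C') C'')"
    and sc: "s = ex_cls C (Pex C P) ?A C' (cls (Prd C ?A C') C'' \<gamma>)" using pexpex_carE[OF s A(1)] by blast
  let ?fC = "times C f (Idt C C')"
  have "Rdx (Pex C (Pex C P)) f s = ex_cls C (Pex C P) ?A' C' (Rdx (Pex C P) ?fC (cls (Prd C ?A C') C'' \<gamma>))"
    unfolding sc by (rule pp.rdx_pex) simp_all
  also have "Rdx (Pex C P) ?fC (cls (Prd C ?A C') C'' \<gamma>) =
      cls (Prd C ?A' C') C'' (Rdx P (times C ?fC (Idt C C'')) \<gamma>)"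
    by (subst rdx_pex) simp_all
  finally have 1: "mu C P ?A' (Rdx (Pex C (Pex C P)) f s) =
      cls ?A' (Prd C C' C'') (Rdx P (as ?A' C' C'') (Rdx P (times C ?fC (Idt C C'')) \<gamma>))"
    by (simp add: mu_eq)
  have 2: "Rdx (Pex C P) f (mu C P ?A s) =
      cls ?A' (Prd C C' C'') (Rdx P (times C f (Idt C (Prd C C' C''))) (Rdx P (as ?A C' C'') \<gamma>))"
    unfolding sc mu_eq[OF A(1) c] by (subst rdx_pex) simp_all
  have "Cmp C (times C ?fC (Idt C C'')) (as ?A' C' C'') = Cmp C (as ?A C' C'') (times C f (Idt C (Prd C C' C'')))"
    by (simp add: as_def)
  then show ?thesis unfolding 1 2 by simp
qed

lemma as_inv_lift: "A \<in> Ob C \<Longrightarrow> B \<in> Ob C \<Longrightarrow> D \<in> Ob C \<Longrightarrow> x \<in> Ar C \<Longrightarrow> Cd C x = Prd C (Prd C A B) D \<Longrightarrow>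
   Cmp C (as A B D) (Cmp C (as' A B D) x) = x"
  by (subst comp_assoc[symmetric]) (simp_all add: as_inv)

lemma mu_forall_adj:
  assumes A: "A \<in> Ob C" and B: "B \<in> Ob C" and C': "C' \<in> Ob C" and C'': "C'' \<in> Ob C"
    and \<gamma>: "\<gamma> \<in> Car P (Prd C (Prd C (Prd C A B) C') C'')"
    and ex1: "is_exponential C B C' E ev1" and ex2: "is_exponential C B C'' G ev2"
  defines "\<psi> \<equiv> Rdx P (kk (Prd C A E) B G ev2) (Rdx P (times C (kk A B E ev1) (Idt C C'')) \<gamma>)"
  defines "\<phi> \<equiv> fa (Prd C (Prd C A E) G) B \<psi>"
  shows "\<forall>x\<in>Car (Pex C P) A. Leq (Pex C P) (Prd C A B) (Rdx (Pex C P) (Pr1 C A B) x)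
            (cls (Prd C A B) (Prd C C' C'') (Rdx P (as (Prd C A B) C' C'') \<gamma>))
          \<longleftrightarrow> Leq (Pex C P) A x (cls A (Prd C E G) (Rdx P (as A E G) \<phi>))"
proof
  note e1[simp] = exp_basic[OF ex1] and e2[simp] = exp_basic[OF ex2]
  note ob[simp] = A B C' C'' \<gamma>
  let ?k1 = "kk A B E ev1" and ?k2 = "kk (Prd C A E) B G ev2"
  have k[simp]: "?k1 \<in> Ar C" "Dm C ?k1 = Prd C (Prd C A E) B" "Cd C ?k1 = Prd C (Prd C A B) C'"
    "?k2 \<in> Ar C" "Dm C ?k2 = Prd C (Prd C (Prd C A E) G) B" "Cd C ?k2 = Prd C (Prd C (Prd C A E) B) C''"
    by (simp_all add: kk_def)
  have \<psi>[simp]: "\<psi> \<in> Car P (Prd C (Prd C (Prd C A E) G) B)" unfolding \<psi>_def by simp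
  have \<phi>[simp]: "\<phi> \<in> Car P (Prd C (Prd C A E) G)" unfolding \<phi>_def by simp
  let ?a1 = "as (Prd C A B) C' C''" and ?a2 = "as A E G"
  have g1[simp]: "Rdx P ?a1 \<gamma> \<in> Car P (Prd C (Prd C A B) (Prd C C' C''))" by simp
  have g2[simp]: "Rdx P ?a2 \<phi> \<in> Car P (Prd C A (Prd C E G))" by simp
  fix x assume "x \<in> Car (Pex C P) A"
  then obtain D \<delta> where D[simp]: "D \<in> Ob C" and \<delta>[simp]: "\<delta> \<in> Car P (Prd C A D)" and x: "x = cls A D \<delta>"
    by (rule car_pexE)
  let ?q = "times C (Pr1 C A B) (Idt C D)"
  have rx: "Rdx (Pex C P) (Pr1 C A B) x = cls (Prd C A B) D (Rdx P ?q \<delta>)"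
    unfolding x by (subst rdx_pex) simp_all
  have qd[simp]: "Rdx P ?q \<delta> \<in> Car P (Prd C (Prd C A B) D)" by simp
  have l1: "Leq (Pex C P) (Prd C A B) (Rdx (Pex C P) (Pr1 C A B) x) (cls (Prd C A B) (Prd C C' C'') (Rdx P ?a1 \<gamma>)) \<longleftrightarrow>
      exle C P (Prd C A B) (D, Rdx P ?q \<delta>) (Prd C C' C'', Rdx P ?a1 \<gamma>)"
    unfolding rx by (rule leq_pex) simp_all
  have l2: "Leq (Pex C P) A x (cls A (Prd C E G) (Rdx P ?a2 \<phi>)) \<longleftrightarrow> exle C P A (D, \<delta>) (Prd C E G, Rdx P ?a2 \<phi>)"
    unfolding x by (rule leq_pex) simp_all
  have "exle C P (Prd C A B) (D, Rdx P ?q \<delta>) (Prd C C' C'', Rdx P ?a1 \<gamma>) \<longleftrightarrow> exle C P A (D, \<delta>) (Prd C E G, Rdx P ?a2 \<phi>)"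
  proof
    assume "exle C P (Prd C A B) (D, Rdx P ?q \<delta>) (Prd C C' C'', Rdx P ?a1 \<gamma>)"
    then obtain M where M: "M \<in> Ar C" "Dm C M = Prd C (Prd C A B) D" "Cd C M = Prd C (Prd C A B) (Prd C C' C'')"
      "Cmp C (Pr1 C (Prd C A B) (Prd C C' C'')) M = Pr1 C (Prd C A B) D"
      "Leq P (Prd C (Prd C A B) D) (Rdx P ?q \<delta>) (Rdx P M (Rdx P ?a1 \<gamma>))"
      by (rule exleE) simp_all
    have Ml: "Cmp C (Pr1 C (Prd C A B) (Prd C C' C'')) (Cmp C M y) = Cmp C (Pr1 C (Prd C A B) D) y"
      if "y \<in> Ar C" "Cd C y = Prd C (Prd C A B) D" for y
      by (rule comp_lift[OF M(4)]) (simp_all add: M that)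
    let ?\<sigma> = "pair C (pair C (Cmp C (Pr1 C A D) (Pr1 C (Prd C A D) B)) (Pr2 C (Prd C A D) B))
                  (Cmp C (Pr2 C A D) (Pr1 C (Prd C A D) B))"
    have \<sigma>[simp]: "?\<sigma> \<in> Ar C" "Dm C ?\<sigma> = Prd C (Prd C A D) B" "Cd C ?\<sigma> = Prd C (Prd C A B) D"
      by simp_all
    let ?h1 = "Cmp C (Pr1 C C' C'') (Cmp C (Pr2 C (Prd C A B) (Prd C C' C'')) (Cmp C M ?\<sigma>))"
    let ?h2 = "Cmp C (Pr2 C C' C'') (Cmp C (Pr2 C (Prd C A B) (Prd C C' C'')) (Cmp C M ?\<sigma>))"
    have "\<exists>g. g \<in> Ar C \<and> Dm C g = Prd C A D \<and> Cd C g = E \<and>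
         Cmp C ev1 (pair C (Cmp C g (Pr1 C (Prd C A D) B)) (Pr2 C (Prd C A D) B)) = ?h1"
      by (rule exp_curry[OF ex1]) (simp_all add: M)
    then obtain e where e: "e \<in> Ar C" "Dm C e = Prd C A D" "Cd C e = E"
         "Cmp C ev1 (pair C (Cmp C e (Pr1 C (Prd C A D) B)) (Pr2 C (Prd C A D) B)) = ?h1" by blast
    have "\<exists>g. g \<in> Ar C \<and> Dm C g = Prd C A D \<and> Cd C g = G \<and>
         Cmp C ev2 (pair C (Cmp C g (Pr1 C (Prd C A D) B)) (Pr2 C (Prd C A D) B)) = ?h2"
      by (rule exp_curry[OF ex2]) (simp_all add: M)
    then obtain g where g: "g \<in> Ar C" "Dm C g = Prd C A D" "Cd C g = G"
         "Cmp C ev2 (pair C (Cmp C g (Pr1 C (Prd C A D) B)) (Pr2 C (Prd C A D) B)) = ?h2" by blast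
    let ?N = "pair C (Pr1 C A D) (pair C e g)"
    have N[simp]: "?N \<in> Ar C" "Dm C ?N = Prd C A D" "Cd C ?N = Prd C A (Prd C E G)" by (simp_all add: e g)
    let ?Y = "times C (Cmp C ?a2 ?N) (Idt C B)"
    let ?W = "Cmp C (times C ?k1 (Idt C C'')) (Cmp C ?k2 ?Y)"
    have eq1: "Cmp C (Pr1 C (Prd C (Prd C A B) C') C'') (Cmp C ?a1 (Cmp C M ?\<sigma>)) =
               Cmp C (Pr1 C (Prd C (Prd C A B) C') C'') ?W"
      by (rule prod_ext[of _ _ "Prd C A B" C']) (simp_all add: M Ml e g as_def kk_def)
    have eq2: "Cmp C (Pr2 C (Prd C (Prd C A B) C') C'') (Cmp C ?a1 (Cmp C M ?\<sigma>)) =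
               Cmp C (Pr2 C (Prd C (Prd C A B) C') C'') ?W"
      by (simp add: M Ml e g as_def kk_def)
    have eqW: "Cmp C ?a1 (Cmp C M ?\<sigma>) = ?W"
      by (rule prod_ext[of _ _ "Prd C (Prd C A B) C'" C'', OF _ _ _ _ _ _ eq1 eq2]) (simp_all add: M e g)
    show "exle C P A (D, \<delta>) (Prd C E G, Rdx P ?a2 \<phi>)"
    proof (rule exleI[where M = ?N])
      have L: "Leq P (Prd C (Prd C A D) B) (Rdx P (Pr1 C (Prd C A D) B) \<delta>) (Rdx P ?Y \<psi>)"
      proof -
        have "Leq P (Dm C ?\<sigma>) (Rdx P ?\<sigma> (Rdx P ?q \<delta>)) (Rdx P ?\<sigma> (Rdx P M (Rdx P ?a1 \<gamma>)))"
          by (rule rdx_mono) (insert M, simp_all)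
        moreover have "Rdx P ?\<sigma> (Rdx P ?q \<delta>) = Rdx P (Pr1 C (Prd C A D) B) \<delta>" by simp
        moreover have "Rdx P ?\<sigma> (Rdx P M (Rdx P ?a1 \<gamma>)) = Rdx P ?Y \<psi>"
        proof -
          have "Rdx P ?\<sigma> (Rdx P M (Rdx P ?a1 \<gamma>)) = Rdx P (Cmp C ?a1 (Cmp C M ?\<sigma>)) \<gamma>"
            by (simp add: M del: times_eq)
          also have "\<dots> = Rdx P ?W \<gamma>" by (simp only: eqW)
          also have "\<dots> = Rdx P ?Y \<psi>" unfolding \<psi>_def by (simp add: e g)
          finally show ?thesis .
        qed
        ultimately show ?thesis by simp
      qed
      have "Leq P (Prd C A D) \<delta> (fa (Prd C A D) B (Rdx P ?Y \<psi>))"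
        using L by (rule fa_adj[THEN iffD1, rotated 4]) (simp_all add: e g)
      moreover have "Rdx P ?N (Rdx P ?a2 \<phi>) = fa (Prd C A D) B (Rdx P ?Y \<psi>)"
      proof -
        have "Rdx P ?N (Rdx P ?a2 \<phi>) = Rdx P (Cmp C ?a2 ?N) \<phi>" by (simp add: e g del: times_eq)
        also have "\<dots> = fa (Prd C A D) B (Rdx P ?Y \<psi>)" unfolding \<phi>_def
          by (subst fa_bc) (simp_all add: e g)
        finally show ?thesis .
      qed
      ultimately show "Leq P (Prd C A D) \<delta> (Rdx P ?N (Rdx P ?a2 \<phi>))" by simp
    qed (simp_all add: e g)
  next
    assume "exle C P A (D, \<delta>) (Prd C E G, Rdx P ?a2 \<phi>)"
    then obtain N where N: "N \<in> Ar C" "Dm C N = Prd C A D" "Cd C N = Prd C A (Prd C E G)"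
      "Cmp C (Pr1 C A (Prd C E G)) N = Pr1 C A D" "Leq P (Prd C A D) \<delta> (Rdx P N (Rdx P ?a2 \<phi>))"
      by (rule exleE) simp_all
    have Nl: "Cmp C (Pr1 C A (Prd C E G)) (Cmp C N y) = Cmp C (Pr1 C A D) y"
      if "y \<in> Ar C" "Cd C y = Prd C A D" for y
      by (rule comp_lift[OF N(4)]) (simp_all add: N that)
    let ?Y = "times C (Cmp C ?a2 N) (Idt C B)"
    have "Rdx P N (Rdx P ?a2 \<phi>) = Rdx P (Cmp C ?a2 N) \<phi>" by (simp add: N del: times_eq)
    also have "\<dots> = fa (Prd C A D) B (Rdx P ?Y \<psi>)" unfolding \<phi>_def
      by (subst fa_bc) (simp_all add: N)
    finally have "Leq P (Prd C A D) \<delta> (fa (Prd C A D) B (Rdx P ?Y \<psi>))" using N(5) by simp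
    then have L: "Leq P (Prd C (Prd C A D) B) (Rdx P (Pr1 C (Prd C A D) B) \<delta>) (Rdx P ?Y \<psi>)"
      by (rule fa_adj[THEN iffD2, rotated 4]) (simp_all add: N)
    let ?\<sigma> = "pair C (pair C (Cmp C (Pr1 C A B) (Pr1 C (Prd C A B) D)) (Pr2 C (Prd C A B) D))
                  (Cmp C (Pr2 C A B) (Pr1 C (Prd C A B) D))"
    have \<sigma>[simp]: "?\<sigma> \<in> Ar C" "Dm C ?\<sigma> = Prd C (Prd C A B) D" "Cd C ?\<sigma> = Prd C (Prd C A D) B"
      by simp_all
    let ?W = "Cmp C (times C ?k1 (Idt C C'')) (Cmp C ?k2 ?Y)"
    let ?M = "Cmp C (as' (Prd C A B) C' C'') (Cmp C ?W ?\<sigma>)"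
    show "exle C P (Prd C A B) (D, Rdx P ?q \<delta>) (Prd C C' C'', Rdx P ?a1 \<gamma>)"
    proof (rule exleI[where M = ?M])
      show "Cmp C (Pr1 C (Prd C A B) (Prd C C' C'')) ?M = Pr1 C (Prd C A B) D"
        by (simp add: N Nl as_def as'_def kk_def)
      have "Leq P (Dm C ?\<sigma>) (Rdx P ?\<sigma> (Rdx P (Pr1 C (Prd C A D) B) \<delta>)) (Rdx P ?\<sigma> (Rdx P ?Y \<psi>))"
        by (rule rdx_mono) (insert N L, simp_all)
      moreover have "Rdx P ?\<sigma> (Rdx P (Pr1 C (Prd C A D) B) \<delta>) = Rdx P ?q \<delta>" by simp
      moreover have "Rdx P ?\<sigma> (Rdx P ?Y \<psi>) = Rdx P ?M (Rdx P ?a1 \<gamma>)"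
      proof -
        have "Rdx P ?\<sigma> (Rdx P ?Y \<psi>) = Rdx P (Cmp C ?W ?\<sigma>) \<gamma>"
          unfolding \<psi>_def by (simp add: N)
        also have "\<dots> = Rdx P (Cmp C ?a1 ?M) \<gamma>"
          by (subst as_inv_lift) (simp_all add: N)
        also have "\<dots> = Rdx P ?M (Rdx P ?a1 \<gamma>)"
          by (rule rdx_comp[symmetric]) (simp_all add: N)
        finally show ?thesis .
      qed
      ultimately show "Leq P (Prd C (Prd C A B) D) (Rdx P ?q \<delta>) (Rdx P ?M (Rdx P ?a1 \<gamma>))" by simp
    qed (simp_all add: N)
  qed
  then show "Leq (Pex C P) (Prd C A B) (Rdx (Pex C P) (Pr1 C A B) x)
            (cls (Prd C A B) (Prd C C' C'') (Rdx P (as (Prd C A B) C' C'') \<gamma>))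
          \<longleftrightarrow> Leq (Pex C P) A x (cls A (Prd C E G) (Rdx P (as A E G) \<phi>))" using l1 l2 by simp
qed

end




lemma ud_of_obj: "UDexp_obj C P \<Longrightarrow> ud C P"
  unfolding UDexp_obj_def SDexp_obj_def by unfold_locales auto

lemma (in cc) forall_unique_gen:
  assumes "doctrine C Q" "is_forall C Q A B u" "is_forall C Q A B u'" "A \<in> Ob C" "y \<in> Car Q (Prd C A B)"
  shows "u y = u' y"
proof -
  have a: "u y \<in> Car Q A" "\<forall>x\<in>Car Q A. Leq Q (Prd C A B) (Rdx Q (Pr1 C A B) x) y \<longleftrightarrow> Leq Q A x (u y)"
    using assms(2,5) unfolding is_forall_def by blast+
  have b: "u' y \<in> Car Q A" "\<forall>x\<in>Car Q A. Leq Q (Prd C A B) (Rdx Q (Pr1 C A B) x) y \<longleftrightarrow> Leq Q A x (u' y)"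
    using assms(3,5) unfolding is_forall_def by blast+
  show ?thesis by (rule radj_unique[OF assms(1,4) a(1) b(1) a(2) b(2)])
qed

context ud begin

lemma pex_obj: "UDexp_obj C (Pex C P)"
  unfolding UDexp_obj_def SDexp_obj_def
  using cat fp exps pex_doctrine pex_universal by blast

lemma eta_pres_forall: "preserves_forall C P C (Pex C P) id id (eta C P)"
  unfolding preserves_forall_def
proof (intro allI impI ballI)
  interpret pp: ud C "Pex C P" by (rule pex_ud)
  fix uP uR A B y
  assume huP: "\<forall>A\<in>Ob C. \<forall>B\<in>Ob C. is_forall C P A B (uP A B)"
    and huR: "\<forall>A\<in>Ob C. \<forall>B\<in>Ob C. is_forall C (Pex C P) A B (uR A B)"
    and A: "A \<in> Ob C" and B: "B \<in> Ob C" and y: "y \<in> Car P (Prd C A B)"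
  have 1: "uP A B y = fa A B y"
    by (rule forall_unique2[OF _ _ A B y]) (use huP A B fa_prop in blast)+
  have 2: "Rdx (Pex C P) (inv_ar C (cmpr C C id id A B)) (eta C P (Prd C A B) y) = eta C P (Prd C A B) y"
    using A B y by (simp add: pexd_id)
  have 3: "uR A B (eta C P (Prd C A B) y) = eta C P A (fa A B y)"
    by (rule pp.forall_unique[OF _ A B _ _ eta_forall_adj[OF A B y]]) (use huR A B y in simp_all)
  show "eta C P A (uP A B y) = uR (id A) (id B)
           (Rdx (Pex C P) (inv_ar C (cmpr C C id id A B)) (eta C P (Prd C A B) y))"
    using 1 2 3 by simp
qed

lemma eta_cell: "UDexp_1cell C P C (Pex C P) id id (eta C P)"
  unfolding UDexp_1cell_def SDexp_1cell_def SD_1cell_def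
proof (intro conjI ballI impI)
  show "is_functor C C id id" by (rule id_functor)
  show "preserves_products C C id id" by (rule id_pres_products)
  show "preserves_exponents C C id id" by (rule id_pres_exponents)
  show "preserves_forall C P C (Pex C P) id id (eta C P)" by (rule eta_pres_forall)
next
  fix A x assume "A \<in> Ob C" "x \<in> Car P A"
  then show "eta C P A x \<in> Car (Pex C P) (id A)" by simp
next
  fix A x y assume "A \<in> Ob C" "x \<in> Car P A" "y \<in> Car P A" "Leq P A x y"
  then show "Leq (Pex C P) (id A) (eta C P A x) (eta C P A y)" using eta_mono by simp
next
  fix f x assume "f \<in> Ar C" "x \<in> Car P (Cd C f)"
  then show "eta C P (Dm C f) (Rdx P f x) = Rdx (Pex C P) (id f) (eta C P (Cd C f) x)"
    using eta_nat by simp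
qed

lemma mu_pres_forall: "preserves_forall C (Pex C (Pex C P)) C (Pex C P) id id (mu C P)"
  unfolding preserves_forall_def
proof (intro allI impI ballI)
  interpret pp: ud C "Pex C P" by (rule pex_ud)
  fix uP uR A B y
  assume huP: "\<forall>A\<in>Ob C. \<forall>B\<in>Ob C. is_forall C (Pex C (Pex C P)) A B (uP A B)"
    and huR: "\<forall>A\<in>Ob C. \<forall>B\<in>Ob C. is_forall C (Pex C P) A B (uR A B)"
    and A[simp]: "A \<in> Ob C" and B[simp]: "B \<in> Ob C" and y: "y \<in> Car (Pex C (Pex C P)) (Prd C A B)"
  obtain C' C'' \<gamma> where c[simp]: "C' \<in> Ob C" "C'' \<in> Ob C" "\<gamma> \<in> Car P (Prd C (Prd C (Prd C A B) C') C'')"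
    and yc: "y = ex_cls C (Pex C P) (Prd C A B) C' (cls (Prd C (Prd C A B) C') C'' \<gamma>)"
    using pexpex_carE[OF y] by auto
  obtain E ev1 where ex1: "is_exponential C B C' E ev1" using exp_some[OF B c(1)] .
  obtain G ev2 where ex2: "is_exponential C B C'' G ev2" using exp_some[OF B c(2)] .
  note e1[simp] = exp_basic[OF ex1] and e2[simp] = exp_basic[OF ex2]
  let ?\<Gamma> = "cls (Prd C (Prd C A B) C') C'' \<gamma>"
  have \<Gamma>[simp]: "?\<Gamma> \<in> Car (Pex C P) (Prd C (Prd C A B) C')" by simp
  let ?k1 = "kk A B E ev1" and ?k2 = "kk (Prd C A E) B G ev2"
  have k[simp]: "?k1 \<in> Ar C" "Dm C ?k1 = Prd C (Prd C A E) B" "Cd C ?k1 = Prd C (Prd C A B) C'"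
    "?k2 \<in> Ar C" "Dm C ?k2 = Prd C (Prd C (Prd C A E) G) B" "Cd C ?k2 = Prd C (Prd C (Prd C A E) B) C''"
    by (simp_all add: kk_def)
  let ?\<theta>1 = "Rdx P (times C ?k1 (Idt C C'')) \<gamma>"
  let ?\<Theta> = "cls (Prd C (Prd C A E) B) C'' ?\<theta>1"
  have \<Theta>[simp]: "?\<Theta> \<in> Car (Pex C P) (Prd C (Prd C A E) B)" by simp
  let ?\<psi> = "Rdx P ?k2 ?\<theta>1"
  let ?\<phi> = "fa (Prd C (Prd C A E) G) B ?\<psi>"
  have 1: "uP A B y = pp.fax A B y"
    by (rule forall_unique_gen[OF pp.pex_doctrine _ _ A y]) (simp_all add: huP pp.fax_forall)
  have 2: "pp.fax A B y = ex_cls C (Pex C P) A E (pp.fa (Prd C A E) B (Rdx (Pex C P) ?k1 ?\<Gamma>))"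
    unfolding yc by (rule pp.fax_eq) (simp_all add: ex1)
  have 3: "Rdx (Pex C P) ?k1 ?\<Gamma> = ?\<Theta>" by (subst rdx_pex) simp_all
  have 4: "pp.fa (Prd C A E) B ?\<Theta> = fax (Prd C A E) B ?\<Theta>"
  proof (rule pp.forall_unique2[OF _ fax_forall])
    show "is_forall C (Pex C P) (Prd C A E) B (pp.fa (Prd C A E) B)"
      by (rule pp.fa_prop[THEN conjunct1, rule_format]) simp_all
  qed simp_all
  have 5: "fax (Prd C A E) B ?\<Theta> = cls (Prd C A E) G ?\<phi>"
    by (rule fax_eq[OF _ B c(2) _ ex2]) simp_all
  have 6: "mu C P A (uP A B y) = cls A (Prd C E G) (Rdx P (as A E G) ?\<phi>)"
    unfolding 1 2 3 4 5 by (rule mu_eq) simp_all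
  have 7: "mu C P (Prd C A B) y = cls (Prd C A B) (Prd C C' C'') (Rdx P (as (Prd C A B) C' C'') \<gamma>)"
    unfolding yc by (rule mu_eq) simp_all
  have 8: "Rdx (Pex C P) (inv_ar C (cmpr C C id id A B)) (mu C P (Prd C A B) y) = mu C P (Prd C A B) y"
    using mu_car[OF _ y] by (simp add: pexd_id)
  have 9: "uR A B (mu C P (Prd C A B) y) = cls A (Prd C E G) (Rdx P (as A E G) ?\<phi>)"
    unfolding 7
    by (rule pp.forall_unique[OF _ A B _ _ mu_forall_adj[OF A B c ex1 ex2]]) (use huR in simp_all)
  show "mu C P A (uP A B y) = uR (id A) (id B)
           (Rdx (Pex C P) (inv_ar C (cmpr C C id id A B)) (mu C P (Prd C A B) y))"
    using 6 8 9 by simp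
qed

lemma mu_cell: "UDexp_1cell C (Pex C (Pex C P)) C (Pex C P) id id (mu C P)"
  unfolding UDexp_1cell_def SDexp_1cell_def SD_1cell_def
proof (intro conjI ballI impI)
  show "is_functor C C id id" by (rule id_functor)
  show "preserves_products C C id id" by (rule id_pres_products)
  show "preserves_exponents C C id id" by (rule id_pres_exponents)
  show "preserves_forall C (Pex C (Pex C P)) C (Pex C P) id id (mu C P)" by (rule mu_pres_forall)
next
  fix A x assume "A \<in> Ob C" "x \<in> Car (Pex C (Pex C P)) A"
  then show "mu C P A x \<in> Car (Pex C P) (id A)" using mu_car by simp
next
  fix A x y assume "A \<in> Ob C" "x \<in> Car (Pex C (Pex C P)) A" "y \<in> Car (Pex C (Pex C P)) A"
    "Leq (Pex C (Pex C P)) A x y"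
  then show "Leq (Pex C P) (id A) (mu C P A x) (mu C P A y)" using mu_mono by simp
next
  fix f x assume "f \<in> Ar C" "x \<in> Car (Pex C (Pex C P)) (Cd C f)"
  then show "mu C P (Dm C f) (Rdx (Pex C (Pex C P)) f x) = Rdx (Pex C P) (id f) (mu C P (Cd C f) x)"
    using mu_nat by simp
qed

end




lemma (in cc) times_id_ar[simp]: "f \<in> Ar C \<Longrightarrow> B \<in> Ob C \<Longrightarrow> times C f (Idt C B) \<in> Ar C"
  "f \<in> Ar C \<Longrightarrow> B \<in> Ob C \<Longrightarrow> Dm C (times C f (Idt C B)) = Prd C (Dm C f) B"
  "f \<in> Ar C \<Longrightarrow> B \<in> Ob C \<Longrightarrow> Cd C (times C f (Idt C B)) = Prd C (Cd C f) B"
  by simp_all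

locale ud2 = c: ud C P + d: ud D R
  for C :: "('o,'a,'z) ccat_scheme" and P :: "('a,'o,'e) pdoc"
  and D :: "('o2,'a2,'z2) ccat_scheme" and R :: "('a2,'o2,'e2) pdoc" +
  fixes Fo :: "'o \<Rightarrow> 'o2" and Fa :: "'a \<Rightarrow> 'a2" and b :: "'o \<Rightarrow> 'e \<Rightarrow> 'e2"
  assumes cell: "UDexp_1cell C P D R Fo Fa b"
begin

lemma Ffun: "is_functor C D Fo Fa" and pprod: "preserves_products C D Fo Fa"
  and pexp: "preserves_exponents C D Fo Fa" and pfa: "preserves_forall C P D R Fo Fa b"
  using cell unfolding UDexp_1cell_def SDexp_1cell_def SD_1cell_def by blast+

lemma b_car[simp]: "A \<in> Ob C \<Longrightarrow> x \<in> Car P A \<Longrightarrow> b A x \<in> Car R (Fo A)"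
  using cell unfolding UDexp_1cell_def SDexp_1cell_def SD_1cell_def by blast
lemma b_mono: "A \<in> Ob C \<Longrightarrow> x \<in> Car P A \<Longrightarrow> y \<in> Car P A \<Longrightarrow> Leq P A x y \<Longrightarrow> Leq R (Fo A) (b A x) (b A y)"
  using cell unfolding UDexp_1cell_def SDexp_1cell_def SD_1cell_def by blast
lemma b_nat: "f \<in> Ar C \<Longrightarrow> x \<in> Car P (Cd C f) \<Longrightarrow> b (Dm C f) (Rdx P f x) = Rdx R (Fa f) (b (Cd C f) x)"
  using cell unfolding UDexp_1cell_def SDexp_1cell_def SD_1cell_def by blast

lemma F_ob[simp]: "X \<in> Ob C \<Longrightarrow> Fo X \<in> Ob D"
  using Ffun unfolding is_functor_def by blast
lemma F_hom: "f \<in> Ar C \<Longrightarrow> Fa f \<in> hom D (Fo (Dm C f)) (Fo (Cd C f))"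
  using Ffun unfolding is_functor_def by blast
lemma F_ar[simp]: "f \<in> Ar C \<Longrightarrow> Fa f \<in> Ar D" using F_hom by (simp add: hom_def)
lemma F_dm[simp]: "f \<in> Ar C \<Longrightarrow> Dm D (Fa f) = Fo (Dm C f)" using F_hom by (simp add: hom_def)
lemma F_cd[simp]: "f \<in> Ar C \<Longrightarrow> Cd D (Fa f) = Fo (Cd C f)" using F_hom by (simp add: hom_def)
lemma F_id[simp]: "X \<in> Ob C \<Longrightarrow> Fa (Idt C X) = Idt D (Fo X)"
  using Ffun unfolding is_functor_def by blast
lemma F_comp[simp]: "f \<in> Ar C \<Longrightarrow> g \<in> Ar C \<Longrightarrow> Cd C f = Dm C g \<Longrightarrow> Fa (Cmp C g f) = Cmp D (Fa g) (Fa f)"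
proof -
  assume a: "f \<in> Ar C" "g \<in> Ar C" "Cd C f = Dm C g"
  have "f \<in> hom C (Dm C f) (Cd C f)" "g \<in> hom C (Cd C f) (Cd C g)" using a by (auto simp: hom_def)
  then show ?thesis using Ffun unfolding is_functor_def by blast
qed

abbreviation cm where "cm A B \<equiv> cmpr C D Fo Fa A B"
abbreviation iv where "iv A B \<equiv> inv_ar D (cmpr C D Fo Fa A B)"

lemma cm_ar[simp]: "A \<in> Ob C \<Longrightarrow> B \<in> Ob C \<Longrightarrow> cm A B \<in> Ar D"
  "A \<in> Ob C \<Longrightarrow> B \<in> Ob C \<Longrightarrow> Dm D (cm A B) = Fo (Prd C A B)"
  "A \<in> Ob C \<Longrightarrow> B \<in> Ob C \<Longrightarrow> Cd D (cm A B) = Prd D (Fo A) (Fo B)"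
  by (simp_all add: cmpr_def)

lemma cm_p1[simp]: "A \<in> Ob C \<Longrightarrow> B \<in> Ob C \<Longrightarrow> Cmp D (Pr1 D (Fo A) (Fo B)) (cm A B) = Fa (Pr1 C A B)"
  by (simp add: cmpr_def)
lemma cm_p2[simp]: "A \<in> Ob C \<Longrightarrow> B \<in> Ob C \<Longrightarrow> Cmp D (Pr2 D (Fo A) (Fo B)) (cm A B) = Fa (Pr2 C A B)"
  by (simp add: cmpr_def)

lemma cm_iso: "A \<in> Ob C \<Longrightarrow> B \<in> Ob C \<Longrightarrow> iso_ar D (cm A B)"
  using pprod unfolding preserves_products_def by blast

lemma iv_ar[simp]: "A \<in> Ob C \<Longrightarrow> B \<in> Ob C \<Longrightarrow> iv A B \<in> Ar D"
  "A \<in> Ob C \<Longrightarrow> B \<in> Ob C \<Longrightarrow> Dm D (iv A B) = Prd D (Fo A) (Fo B)"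
  "A \<in> Ob C \<Longrightarrow> B \<in> Ob C \<Longrightarrow> Cd D (iv A B) = Fo (Prd C A B)"
  using d.iso_inv[OF cm_iso] by simp_all

lemma cm_iv[simp]: "A \<in> Ob C \<Longrightarrow> B \<in> Ob C \<Longrightarrow> Cmp D (cm A B) (iv A B) = Idt D (Prd D (Fo A) (Fo B))"
  using d.iso_inv[OF cm_iso] by simp
lemma iv_cm[simp]: "A \<in> Ob C \<Longrightarrow> B \<in> Ob C \<Longrightarrow> Cmp D (iv A B) (cm A B) = Idt D (Fo (Prd C A B))"
  using d.iso_inv[OF cm_iso] by simp

lemma cm_iv_l[simp]: "A \<in> Ob C \<Longrightarrow> B \<in> Ob C \<Longrightarrow> x \<in> Ar D \<Longrightarrow> Cd D x = Prd D (Fo A) (Fo B) \<Longrightarrow>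
  Cmp D (cm A B) (Cmp D (iv A B) x) = x"
  by (subst d.comp_assoc[symmetric]) simp_all
lemma iv_cm_l[simp]: "A \<in> Ob C \<Longrightarrow> B \<in> Ob C \<Longrightarrow> x \<in> Ar D \<Longrightarrow> Cd D x = Fo (Prd C A B) \<Longrightarrow>
  Cmp D (iv A B) (Cmp D (cm A B) x) = x"
  by (subst d.comp_assoc[symmetric]) simp_all

lemma Fp1_iv[simp]: "A \<in> Ob C \<Longrightarrow> B \<in> Ob C \<Longrightarrow> Cmp D (Fa (Pr1 C A B)) (iv A B) = Pr1 D (Fo A) (Fo B)"
proof -
  assume ab: "A \<in> Ob C" "B \<in> Ob C"
  have "Cmp D (Fa (Pr1 C A B)) (iv A B) = Cmp D (Cmp D (Pr1 D (Fo A) (Fo B)) (cm A B)) (iv A B)"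
    using ab by simp
  also have "\<dots> = Pr1 D (Fo A) (Fo B)" using ab by (simp del: cm_p1)
  finally show ?thesis .
qed
lemma Fp2_iv[simp]: "A \<in> Ob C \<Longrightarrow> B \<in> Ob C \<Longrightarrow> Cmp D (Fa (Pr2 C A B)) (iv A B) = Pr2 D (Fo A) (Fo B)"
proof -
  assume ab: "A \<in> Ob C" "B \<in> Ob C"
  have "Cmp D (Fa (Pr2 C A B)) (iv A B) = Cmp D (Cmp D (Pr2 D (Fo A) (Fo B)) (cm A B)) (iv A B)"
    using ab by simp
  also have "\<dots> = Pr2 D (Fo A) (Fo B)" using ab by (simp del: cm_p2)
  finally show ?thesis .
qed
lemma Fp1_iv_l[simp]: "A \<in> Ob C \<Longrightarrow> B \<in> Ob C \<Longrightarrow> x \<in> Ar D \<Longrightarrow> Cd D x = Prd D (Fo A) (Fo B) \<Longrightarrow>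
  Cmp D (Fa (Pr1 C A B)) (Cmp D (iv A B) x) = Cmp D (Pr1 D (Fo A) (Fo B)) x"
  by (subst d.comp_assoc[symmetric]) simp_all
lemma Fp2_iv_l[simp]: "A \<in> Ob C \<Longrightarrow> B \<in> Ob C \<Longrightarrow> x \<in> Ar D \<Longrightarrow> Cd D x = Prd D (Fo A) (Fo B) \<Longrightarrow>
  Cmp D (Fa (Pr2 C A B)) (Cmp D (iv A B) x) = Cmp D (Pr2 D (Fo A) (Fo B)) x"
  by (subst d.comp_assoc[symmetric]) simp_all

lemma F_pair[simp]: "f \<in> Ar C \<Longrightarrow> g \<in> Ar C \<Longrightarrow> Dm C f = Dm C g \<Longrightarrow>
  Fa (pair C f g) = Cmp D (iv (Cd C f) (Cd C g)) (pair D (Fa f) (Fa g))"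
proof -
  assume a: "f \<in> Ar C" "g \<in> Ar C" "Dm C f = Dm C g"
  let ?A = "Cd C f" and ?B = "Cd C g"
  have "Cmp D (cm ?A ?B) (Fa (pair C f g)) = pair D (Fa f) (Fa g)"
  proof (rule d.prod_ext[of _ _ "Fo ?A" "Fo ?B"])
    show "Cmp D (Pr1 D (Fo ?A) (Fo ?B)) (Cmp D (cm ?A ?B) (Fa (pair C f g))) =
      Cmp D (Pr1 D (Fo ?A) (Fo ?B)) (pair D (Fa f) (Fa g))"
      using a by (subst d.comp_assoc[symmetric]) (simp_all del: F_comp add: F_comp[symmetric])
    show "Cmp D (Pr2 D (Fo ?A) (Fo ?B)) (Cmp D (cm ?A ?B) (Fa (pair C f g))) =
      Cmp D (Pr2 D (Fo ?A) (Fo ?B)) (pair D (Fa f) (Fa g))"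
      using a by (subst d.comp_assoc[symmetric]) (simp_all del: F_comp add: F_comp[symmetric])
  qed (use a in simp_all)
  then have "Cmp D (iv ?A ?B) (Cmp D (cm ?A ?B) (Fa (pair C f g))) = Cmp D (iv ?A ?B) (pair D (Fa f) (Fa g))"
    by simp
  then show ?thesis using a by simp
qed

lemma F_cancel:
  assumes "A \<in> Ob C" "B \<in> Ob C" "h \<in> Ar D" "k \<in> Ar D" "Cd D h = Fo (Prd C A B)" "Cd D k = Fo (Prd C A B)"
    "Cmp D (cm A B) h = Cmp D (cm A B) k"
  shows "h = k"
proof -
  have "h = Cmp D (iv A B) (Cmp D (cm A B) h)" using assms(1-6) by simp
  also have "\<dots> = Cmp D (iv A B) (Cmp D (cm A B) k)" using assms(7) by simp
  also have "\<dots> = k" using assms(1-6) by simp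
  finally show ?thesis .
qed

lemma cm_p1_l[simp]: "A \<in> Ob C \<Longrightarrow> B \<in> Ob C \<Longrightarrow> x \<in> Ar D \<Longrightarrow> Cd D x = Fo (Prd C A B) \<Longrightarrow>
  Cmp D (Pr1 D (Fo A) (Fo B)) (Cmp D (cm A B) x) = Cmp D (Fa (Pr1 C A B)) x"
  by (subst d.comp_assoc[symmetric]) simp_all
lemma cm_p2_l[simp]: "A \<in> Ob C \<Longrightarrow> B \<in> Ob C \<Longrightarrow> x \<in> Ar D \<Longrightarrow> Cd D x = Fo (Prd C A B) \<Longrightarrow>
  Cmp D (Pr2 D (Fo A) (Fo B)) (Cmp D (cm A B) x) = Cmp D (Fa (Pr2 C A B)) x"
  by (subst d.comp_assoc[symmetric]) simp_all

abbreviation bx where "bx \<equiv> bex C P D R Fo Fa b"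

lemma bex_exle:
  assumes A: "A \<in> Ob C" and B: "B \<in> Ob C" "B' \<in> Ob C"
    and \<alpha>: "\<alpha> \<in> Car P (Prd C A B)" "\<alpha>' \<in> Car P (Prd C A B')"
    and le: "exle C P A (B, \<alpha>) (B', \<alpha>')"
  shows "exle D R (Fo A) (Fo B, Rdx R (iv A B) (b (Prd C A B) \<alpha>)) (Fo B', Rdx R (iv A B') (b (Prd C A B') \<alpha>'))"
proof -
  note ob[simp] = A B \<alpha>
  obtain M where M: "M \<in> Ar C" "Dm C M = Prd C A B" "Cd C M = Prd C A B'"
    "Cmp C (Pr1 C A B') M = Pr1 C A B" "Leq P (Prd C A B) \<alpha> (Rdx P M \<alpha>')"
    using c.exleE[OF le A B] by blast
  have FM: "Cmp D (Fa (Pr1 C A B')) (Fa M) = Fa (Pr1 C A B)"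
    using M by (simp del: F_comp add: F_comp[symmetric])
  have Ml: "Cmp D (Fa (Pr1 C A B')) (Cmp D (Fa M) x) = Cmp D (Fa (Pr1 C A B)) x"
    if "x \<in> Ar D" "Cd D x = Fo (Prd C A B)" for x
    by (rule d.comp_lift[OF FM]) (simp_all add: M that)
  let ?M' = "Cmp D (cm A B') (Cmp D (Fa M) (iv A B))"
  show ?thesis
  proof (rule d.exleI[where M = ?M'])
    have "Leq R (Fo (Prd C A B)) (b (Prd C A B) \<alpha>) (b (Prd C A B) (Rdx P M \<alpha>'))"
      by (rule b_mono) (insert M, simp_all)
    also have "b (Prd C A B) (Rdx P M \<alpha>') = Rdx R (Fa M) (b (Prd C A B') \<alpha>')"
      using b_nat[of M \<alpha>'] M by simp
    finally have L: "Leq R (Fo (Prd C A B)) (b (Prd C A B) \<alpha>) (Rdx R (Fa M) (b (Prd C A B') \<alpha>'))" .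
    have "Leq R (Dm D (iv A B)) (Rdx R (iv A B) (b (Prd C A B) \<alpha>)) (Rdx R (iv A B) (Rdx R (Fa M) (b (Prd C A B') \<alpha>')))"
      by (rule d.rdx_mono) (insert M L, simp_all)
    moreover have "Rdx R (iv A B) (Rdx R (Fa M) (b (Prd C A B') \<alpha>')) = Rdx R ?M' (Rdx R (iv A B') (b (Prd C A B') \<alpha>'))"
      by (simp add: M)
    ultimately show "Leq R (Prd D (Fo A) (Fo B)) (Rdx R (iv A B) (b (Prd C A B) \<alpha>))
        (Rdx R ?M' (Rdx R (iv A B') (b (Prd C A B') \<alpha>')))" by simp
  qed (simp_all add: M Ml)
qed

lemma bex_cls:
  assumes A: "A \<in> Ob C" and B: "B \<in> Ob C" and \<alpha>: "\<alpha> \<in> Car P (Prd C A B)"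
  shows "bx A (c.cls A B \<alpha>) = d.cls (Fo A) (Fo B) (Rdx R (iv A B) (b (Prd C A B) \<alpha>))"
proof -
  have e: "(B, \<alpha>) \<in> c.els A" using B \<alpha> by simp
  have "ex_cls D R (Fo A) (Fo (fst p)) (Rdx R (iv A (fst p)) (b (Prd C A (fst p)) (snd p)))
        = d.cls (Fo A) (Fo B) (Rdx R (iv A B) (b (Prd C A B) \<alpha>))" if p: "p \<in> c.cls A B \<alpha>" for p
  proof -
    obtain B1 a1 where pp: "p = (B1, a1)" by (cases p)
    have p1: "B1 \<in> Ob C" "a1 \<in> Car P (Prd C A B1)" "exle C P A (B, \<alpha>) (B1, a1)" "exle C P A (B1, a1) (B, \<alpha>)"
      using p unfolding pp c.cls_iff by auto
    show ?thesis unfolding pp fst_conv snd_conv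
      by (rule d.cls_eqI) (simp_all add: A B \<alpha> p1 bex_exle)
  qed
  moreover have "(B, \<alpha>) \<in> c.cls A B \<alpha>" using c.cls_self[OF A e] .
  ultimately show ?thesis unfolding bex_def by auto
qed

lemma bex_car:
  assumes A: "A \<in> Ob C" and s: "s \<in> Car (Pex C P) A"
  shows "bx A s \<in> Car (Pex D R) (Fo A)"
proof -
  obtain B \<alpha> where b: "B \<in> Ob C" "\<alpha> \<in> Car P (Prd C A B)" "s = c.cls A B \<alpha>" using s by (rule c.car_pexE)
  show ?thesis unfolding b(3) bex_cls[OF A b(1,2)] by (simp add: A b)
qed

lemma bex_mono:
  assumes A: "A \<in> Ob C" and s: "s \<in> Car (Pex C P) A" and t: "t \<in> Car (Pex C P) A"
    and le: "Leq (Pex C P) A s t"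
  shows "Leq (Pex D R) (Fo A) (bx A s) (bx A t)"
proof -
  obtain B \<alpha> where b: "B \<in> Ob C" "\<alpha> \<in> Car P (Prd C A B)" "s = c.cls A B \<alpha>" using s by (rule c.car_pexE)
  obtain B' \<alpha>' where b': "B' \<in> Ob C" "\<alpha>' \<in> Car P (Prd C A B')" "t = c.cls A B' \<alpha>'" using t by (rule c.car_pexE)
  have "exle C P A (B, \<alpha>) (B', \<alpha>')" using le unfolding b(3) b'(3) by (rule c.leq_pexD) (simp_all add: A b b')
  then have "exle D R (Fo A) (Fo B, Rdx R (iv A B) (b (Prd C A B) \<alpha>)) (Fo B', Rdx R (iv A B') (b (Prd C A B') \<alpha>'))"
    by (rule bex_exle[OF A b(1) b'(1) b(2) b'(2)])
  then show ?thesis unfolding b(3) b'(3) bex_cls[OF A b(1,2)] bex_cls[OF A b'(1,2)]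
    by (rule d.leq_pexI) (simp_all add: A b b')
qed

lemma bex_nat:
  assumes f: "f \<in> Ar C" and s: "s \<in> Car (Pex C P) (Cd C f)"
  shows "bx (Dm C f) (Rdx (Pex C P) f s) = Rdx (Pex D R) (Fa f) (bx (Cd C f) s)"
proof -
  let ?A = "Cd C f" and ?A' = "Dm C f"
  have A[simp]: "?A \<in> Ob C" "?A' \<in> Ob C" using f by auto
  note f[simp]
  obtain B \<alpha> where bb[simp]: "B \<in> Ob C" "\<alpha> \<in> Car P (Prd C ?A B)" and sc: "s = c.cls ?A B \<alpha>"
    using s by (rule c.car_pexE)
  let ?fB = "times C f (Idt C B)"
  have 1: "bx ?A' (Rdx (Pex C P) f s) = d.cls (Fo ?A') (Fo B) (Rdx R (iv ?A' B) (Rdx R (Fa ?fB) (b (Prd C ?A B) \<alpha>)))"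
  proof -
    have "bx ?A' (Rdx (Pex C P) f s) = bx ?A' (c.cls ?A' B (Rdx P ?fB \<alpha>))"
      unfolding sc by (subst c.rdx_pex) simp_all
    also have "\<dots> = d.cls (Fo ?A') (Fo B) (Rdx R (iv ?A' B) (b (Prd C ?A' B) (Rdx P ?fB \<alpha>)))"
      by (rule bex_cls) simp_all
    also have "b (Prd C ?A' B) (Rdx P ?fB \<alpha>) = Rdx R (Fa ?fB) (b (Prd C ?A B) \<alpha>)"
      using b_nat[of ?fB \<alpha>] by (simp del: times_def)
    finally show ?thesis .
  qed
  have 2: "Rdx (Pex D R) (Fa f) (bx ?A s) =
     d.cls (Fo ?A') (Fo B) (Rdx R (times D (Fa f) (Idt D (Fo B))) (Rdx R (iv ?A B) (b (Prd C ?A B) \<alpha>)))"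
    unfolding sc bex_cls[OF A(1) bb] by (subst d.rdx_pex) simp_all
  have "Cmp D (Fa ?fB) (iv ?A' B) = Cmp D (iv ?A B) (times D (Fa f) (Idt D (Fo B)))"
    by (rule F_cancel[of ?A B]) simp_all
  then show ?thesis unfolding 1 2 by simp
qed

lemma bex_pres_forall: "preserves_forall C (Pex C P) D (Pex D R) Fo Fa bx"
  unfolding preserves_forall_def
proof (intro allI impI ballI)
  fix uP uR A B y
  assume huP: "\<forall>A\<in>Ob C. \<forall>B\<in>Ob C. is_forall C (Pex C P) A B (uP A B)"
    and huR: "\<forall>A\<in>Ob D. \<forall>B\<in>Ob D. is_forall D (Pex D R) A B (uR A B)"
    and A[simp]: "A \<in> Ob C" and B[simp]: "B \<in> Ob C" and y: "y \<in> Car (Pex C P) (Prd C A B)"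
  obtain C' \<gamma> where cc[simp]: "C' \<in> Ob C" "\<gamma> \<in> Car P (Prd C (Prd C A B) C')" and yc: "y = c.cls (Prd C A B) C' \<gamma>"
    using y by (rule c.car_pexE)
  obtain E ev where ex: "is_exponential C B C' E ev" using c.exp_some[OF B cc(1)] .
  note e[simp] = c.exp_basic[OF ex]
  let ?ev' = "Cmp D (Fa ev) (iv E B)"
  have exD: "is_exponential D (Fo B) (Fo C') (Fo E) ?ev'"
    using pexp ex unfolding preserves_exponents_def by simp
  let ?k = "c.kk A B E ev"
  have k[simp]: "?k \<in> Ar C" "Dm C ?k = Prd C (Prd C A E) B" "Cd C ?k = Prd C (Prd C A B) C'"
    by (simp_all add: c.kk_def)
  let ?\<theta> = "Rdx P ?k \<gamma>"
  let ?t = "c.fa (Prd C A E) B ?\<theta>"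
  let ?b\<gamma> = "b (Prd C (Prd C A B) C') \<gamma>"
  have fa_c: "\<forall>A\<in>Ob C. \<forall>B\<in>Ob C. is_forall C P A B (c.fa A B)" using c.fa_prop by blast
  have fa_d: "\<forall>A\<in>Ob D. \<forall>B\<in>Ob D. is_forall D R A B (d.fa A B)" using d.fa_prop by blast
  have 1: "uP A B y = c.fax A B y"
    by (rule c.forall_unique_gen[OF c.pex_doctrine _ _ A y]) (simp_all add: huP c.fax_forall)
  have 2: "c.fax A B y = c.cls A E ?t"
    unfolding yc by (rule c.fax_eq) (simp_all add: ex)
  have 3: "bx A (c.cls A E ?t) = d.cls (Fo A) (Fo E) (Rdx R (iv A E) (b (Prd C A E) ?t))"
    by (rule bex_cls) simp_all
  have 4: "b (Prd C A E) ?t = d.fa (Fo (Prd C A E)) (Fo B) (Rdx R (iv (Prd C A E) B) (b (Prd C (Prd C A E) B) ?\<theta>))"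
    using pfa fa_c fa_d unfolding preserves_forall_def by simp
  have 5: "b (Prd C (Prd C A E) B) ?\<theta> = Rdx R (Fa ?k) ?b\<gamma>"
    using b_nat[of ?k \<gamma>] by simp
  have 6: "Rdx R (iv A E) (d.fa (Fo (Prd C A E)) (Fo B) (Rdx R (iv (Prd C A E) B) (Rdx R (Fa ?k) ?b\<gamma>))) =
     d.fa (Prd D (Fo A) (Fo E)) (Fo B) (Rdx R (times D (iv A E) (Idt D (Fo B))) (Rdx R (iv (Prd C A E) B) (Rdx R (Fa ?k) ?b\<gamma>)))"
    by (subst d.fa_bc) simp_all
  have L: "bx A (uP A B y) = d.cls (Fo A) (Fo E)
      (d.fa (Prd D (Fo A) (Fo E)) (Fo B) (Rdx R (times D (iv A E) (Idt D (Fo B))) (Rdx R (iv (Prd C A E) B) (Rdx R (Fa ?k) ?b\<gamma>))))"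
    unfolding 1 2 3 4 5 6 ..
  let ?\<rho> = "Rdx R (times D (iv A B) (Idt D (Fo C'))) (Rdx R (iv (Prd C A B) C') ?b\<gamma>)"
  have 7: "Rdx (Pex D R) (iv A B) (bx (Prd C A B) y) = d.cls (Prd D (Fo A) (Fo B)) (Fo C') ?\<rho>"
    unfolding yc bex_cls[OF c.prd_ob[OF A B] cc(1,2)] by (subst d.rdx_pex) simp_all
  have 8: "uR (Fo A) (Fo B) (d.cls (Prd D (Fo A) (Fo B)) (Fo C') ?\<rho>) =
      d.fax (Fo A) (Fo B) (d.cls (Prd D (Fo A) (Fo B)) (Fo C') ?\<rho>)"
    by (rule d.forall_unique_gen[OF d.pex_doctrine, where A="Fo A" and B="Fo B" and u="uR (Fo A) (Fo B)" and u'="d.fax (Fo A) (Fo B)"])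
       (simp_all add: huR d.fax_forall)
  have 9: "d.fax (Fo A) (Fo B) (d.cls (Prd D (Fo A) (Fo B)) (Fo C') ?\<rho>) =
      d.cls (Fo A) (Fo E) (d.fa (Prd D (Fo A) (Fo E)) (Fo B) (Rdx R (d.kk (Fo A) (Fo B) (Fo E) ?ev') ?\<rho>))"
    by (rule d.fax_eq[OF _ _ _ _ exD]) simp_all
  have eq: "Cmp D (Fa ?k) (Cmp D (iv (Prd C A E) B) (times D (iv A E) (Idt D (Fo B)))) =
     Cmp D (iv (Prd C A B) C') (Cmp D (times D (iv A B) (Idt D (Fo C'))) (d.kk (Fo A) (Fo B) (Fo E) ?ev'))"
    by (rule F_cancel[of "Prd C A B" C']) (simp_all add: c.kk_def d.kk_def)
  have 10: "Rdx R (times D (iv A E) (Idt D (Fo B))) (Rdx R (iv (Prd C A E) B) (Rdx R (Fa ?k) ?b\<gamma>)) =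
     Rdx R (d.kk (Fo A) (Fo B) (Fo E) ?ev') ?\<rho>"
  proof -
    have kd: "d.kk (Fo A) (Fo B) (Fo E) ?ev' \<in> Ar D" "Dm D (d.kk (Fo A) (Fo B) (Fo E) ?ev') = Prd D (Prd D (Fo A) (Fo E)) (Fo B)"
      "Cd D (d.kk (Fo A) (Fo B) (Fo E) ?ev') = Prd D (Prd D (Fo A) (Fo B)) (Fo C')"
      by (simp_all add: d.kk_def)
    have "Rdx R (times D (iv A E) (Idt D (Fo B))) (Rdx R (iv (Prd C A E) B) (Rdx R (Fa ?k) ?b\<gamma>)) =
       Rdx R (Cmp D (Fa ?k) (Cmp D (iv (Prd C A E) B) (times D (iv A E) (Idt D (Fo B))))) ?b\<gamma>"
      by (simp del: times_def F_pair; simp?)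
    also have "\<dots> = Rdx R (Cmp D (iv (Prd C A B) C') (Cmp D (times D (iv A B) (Idt D (Fo C'))) (d.kk (Fo A) (Fo B) (Fo E) ?ev'))) ?b\<gamma>"
      by (simp only: eq)
    also have "\<dots> = Rdx R (d.kk (Fo A) (Fo B) (Fo E) ?ev') ?\<rho>"
      using kd by (simp del: times_def F_pair; simp?)
    finally show ?thesis .
  qed
  show "bx A (uP A B y) = uR (Fo A) (Fo B) (Rdx (Pex D R) (iv A B) (bx (Prd C A B) y))"
    unfolding L 7 8 9 10 ..
qed

lemma bex_cell: "UDexp_1cell C (Pex C P) D (Pex D R) Fo Fa bx"
  unfolding UDexp_1cell_def SDexp_1cell_def SD_1cell_def
proof (intro conjI ballI impI)
  show "is_functor C D Fo Fa" by (rule Ffun)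
  show "preserves_products C D Fo Fa" by (rule pprod)
  show "preserves_exponents C D Fo Fa" by (rule pexp)
  show "preserves_forall C (Pex C P) D (Pex D R) Fo Fa bx" by (rule bex_pres_forall)
next
  fix A x assume "A \<in> Ob C" "x \<in> Car (Pex C P) A"
  then show "bx A x \<in> Car (Pex D R) (Fo A)" by (rule bex_car)
next
  fix A x y assume "A \<in> Ob C" "x \<in> Car (Pex C P) A" "y \<in> Car (Pex C P) A" "Leq (Pex C P) A x y"
  then show "Leq (Pex D R) (Fo A) (bx A x) (bx A y)" by (rule bex_mono)
next
  fix f x assume "f \<in> Ar C" "x \<in> Car (Pex C P) (Cd C f)"
  then show "bx (Dm C f) (Rdx (Pex C P) f x) = Rdx (Pex D R) (Fa f) (bx (Cd C f) x)" by (rule bex_nat)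
qed

end



theorem theorem7:
  shows
  "(\<forall>(C :: ('o,'a) ccat) (P :: ('a,'o,'e) pdoc).
      UDexp_obj C P \<longrightarrow> UDexp_obj C (Pex C P))
   \<and> (\<forall>(C :: ('o,'a) ccat) (P :: ('a,'o,'e) pdoc) (D :: ('o2,'a2) ccat) (R :: ('a2,'o2,'e2) pdoc)
        (Fo :: 'o \<Rightarrow> 'o2) (Fa :: 'a \<Rightarrow> 'a2) (b :: 'o \<Rightarrow> 'e \<Rightarrow> 'e2).
      UDexp_obj C P \<longrightarrow> UDexp_obj D R \<longrightarrow> UDexp_1cell C P D R Fo Fa b \<longrightarrow>
      UDexp_1cell C (Pex C P) D (Pex D R) Fo Fa (bex C P D R Fo Fa b))
   \<and> (\<forall>(C :: ('o,'a) ccat) (P :: ('a,'o,'e) pdoc).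
      UDexp_obj C P \<longrightarrow>
        UDexp_1cell C P C (Pex C P) id id (eta C P) \<and>
        UDexp_1cell C (Pex C (Pex C P)) C (Pex C P) id id (mu C P))"
proof (intro conjI allI impI)
  fix C :: "('o,'a) ccat" and P :: "('a,'o,'e) pdoc"
  assume "UDexp_obj C P"
  then show "UDexp_obj C (Pex C P)" by (rule ud.pex_obj[OF ud_of_obj])
next
  fix C :: "('o,'a) ccat" and P :: "('a,'o,'e) pdoc" and D :: "('o2,'a2) ccat" and R :: "('a2,'o2,'e2) pdoc"
    and Fo :: "'o \<Rightarrow> 'o2" and Fa :: "'a \<Rightarrow> 'a2" and b :: "'o \<Rightarrow> 'e \<Rightarrow> 'e2"
  assume h: "UDexp_obj C P" "UDexp_obj D R" "UDexp_1cell C P D R Fo Fa b"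
  have "ud2 C P D R Fo Fa b"
    unfolding ud2_def ud2_axioms_def using ud_of_obj[OF h(1)] ud_of_obj[OF h(2)] h(3) by blast
  then show "UDexp_1cell C (Pex C P) D (Pex D R) Fo Fa (bex C P D R Fo Fa b)" by (rule ud2.bex_cell)
next
  fix C :: "('o,'a) ccat" and P :: "('a,'o,'e) pdoc"
  assume "UDexp_obj C P"
  then show "UDexp_1cell C P C (Pex C P) id id (eta C P)" by (rule ud.eta_cell[OF ud_of_obj])
next
  fix C :: "('o,'a) ccat" and P :: "('a,'o,'e) pdoc"
  assume "UDexp_obj C P"
  then show "UDexp_1cell C (Pex C (Pex C P)) C (Pex C P) id id (mu C P)" by (rule ud.mu_cell[OF ud_of_obj])
qed

end
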